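(* Let $(\rho_n)_{n\ge1}$ with $\rho_n$ a probability measure on $\mathbb{Y}_n$. Then $(\rho_n)$ is LLN-appropriate if and only if there exist reals $(c_k)_{k\ge1}$ such that (1) for every cycle $\sigma\in S_\infty$ of length $k$, $\lim_n n^{|\sigma|/2}M_{\rho_n}(\sigma)=c_k$; and (2) for every $r\ge2$ and cycles $\sigma_1,\dots,\sigma_r\in S_\infty$ with pairwise disjoint supports, $\lim_n n^{(|\sigma_1|+\dots+|\sigma_r|)/2}\kappa_{\rho_n,r}(\sigma_1,\dots,\sigma_r)=0$.
   Context: $\mathbb{Y}_n$: partitions of $n$; $S_\infty=\bigcup_mS_m$; $|\sigma|$ is the minimal number of transpositions whose product is $\sigma$ (so a $k$-cycle has $|\sigma|=k-1$). $M_\rho(\sigma)=\sum_{\lambda\in\mathbb{Y}_n}\rho(\lambda)\chi_\lambda(\tau)/\dim\lambda$ if $\sigma$ is conjugate to some $\tau\in S_n$, else $0$ ($\chi_\lambda$ irreducible characters, $\dim\lambda=\chi_\lambda(e)$). Permutation-cumulant of permutations with disjoint supports: $\kappa_{\rho,r}(\sigma_1,\dots,\sigma_r)=\sum_{\pi}(-1)^{|\pi|-1}(|\pi|-1)!\prod_{B\in\pi}M_\rho(\prod_{j\in B}\sigma_j)$, over set partitions $\pi$ of $\{1,\dots,r\}$. Young generating function $A_\rho=\sum_{\vec i}M_\rho(\sigma_{\vec i})\prod_{k\ge1}n^{i_k(k-1)/2}x_k^{i_k}/i_k!$ over finitely supported $\vec i\in\mathbb{Z}_{\ge0}^{\mathbb{N}}$,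 $\sigma_{\vec i}$ any permutation with $i_k$ cycles of length $k$ for each $k\ge2$. $(\rho_n)$ is LLN-appropriate if for some reals $c_i$, $\lim_n\partial_i\ln A_{\rho_n}|_{\vec x=0}=c_i$ for all $i$ and all formal mixed derivatives of order $\ge2$ of $\ln A_{\rho_n}$ at $\vec x=0$ tend to $0$. *)

theory Defs
  imports Complex_Main "HOL-Combinatorics.Combinatorics" "HOL-Library.Disjoint_Sets"
begin

definition partitions :: "nat \<Rightarrow> nat list set" where
  "partitions n = {ls. sum_list ls = n \<and> (\<forall>x\<in>set ls. 0 < x) \<and> sorted_wrt (\<ge>) ls}"

definition supp :: "(nat \<Rightarrow> nat) \<Rightarrow> nat set" where
  "supp \<sigma> = {x. \<sigma> x \<noteq> x}"

definition finperm :: "(nat \<Rightarrow> nat) \<Rightarrow> bool" where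
  "finperm \<sigma> \<longleftrightarrow> bij \<sigma> \<and> finite (supp \<sigma>)"

definition cyc_len :: "(nat \<Rightarrow> nat) \<Rightarrow> nat \<Rightarrow> nat" where
  "cyc_len \<sigma> x = (LEAST k. 0 < k \<and> (\<sigma> ^^ k) x = x)"

definition ncyc :: "(nat \<Rightarrow> nat) \<Rightarrow> nat \<Rightarrow> nat" where
  "ncyc \<sigma> k = card {x \<in> supp \<sigma>. cyc_len \<sigma> x = k} div k"

text \<open>Cycle type (as a list of cycle lengths, including fixed points) of \<sigma> regarded
  as an element of S_n (valid when card (supp \<sigma>) \<le> n).\<close>
definition ctype :: "nat \<Rightarrow> (nat \<Rightarrow> nat) \<Rightarrow> nat list" where
  "ctype n \<sigma> = replicate (n - card (supp \<sigma>)) 1 @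
     concat (map (\<lambda>k. replicate (ncyc \<sigma> k) k) [2..<card (supp \<sigma>) + 1])"

definition is_cycle :: "nat \<Rightarrow> (nat \<Rightarrow> nat) \<Rightarrow> bool" where
  "is_cycle k \<sigma> \<longleftrightarrow> (\<exists>cs. distinct cs \<and> length cs = k \<and> \<sigma> = cycle_of_list cs)"

text \<open>Coefficient of x^\<alpha> in p_{\<mu>_1} \<cdots> p_{\<mu>_m}(x_0,\<dots>,x_{l-1}) equals the number of
  maps f of the parts to the variables with \<Sum>_{f j = i} \<mu>_j = \<alpha>_i. The Frobenius formula
  \<chi>_\<lambda>(\<mu>) = [x^{\<lambda>+\<delta>}] a_\<delta> p_\<mu> with l = length p variables, \<delta>_i = l-1-i.\<close>
definition frob_char :: "nat list \<Rightarrow> nat list \<Rightarrow> int" where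
  "frob_char p \<mu> = (let l = length p in
     \<Sum>w | w permutes {..<l}. sign w *
       int (card {f \<in> {..<length \<mu>} \<rightarrow>\<^sub>E {..<l}.
              \<forall>i<l. (\<Sum>j | j < length \<mu> \<and> f j = i. \<mu> ! j) + (l - 1 - w i)
                     = p ! i + (l - 1 - i)}))"

definition dimY :: "nat list \<Rightarrow> int" where
  "dimY p = frob_char p (replicate (sum_list p) 1)"

definition Mrho :: "(nat \<Rightarrow> nat list \<Rightarrow> real) \<Rightarrow> nat \<Rightarrow> (nat \<Rightarrow> nat) \<Rightarrow> real" where
  "Mrho \<rho> n \<sigma> =
    (if \<exists>\<tau> g. \<tau> permutes {..<n} \<and> finperm g \<and> \<sigma> = g \<circ> \<tau> \<circ> inv g
     then (\<Sum>p\<in>partitions n. \<rho> n p * of_int (frob_char p (ctype n \<sigma>)) / of_int (dimY p))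
     else 0)"

definition perm_prod :: "(nat \<Rightarrow> (nat \<Rightarrow> nat)) \<Rightarrow> nat set \<Rightarrow> (nat \<Rightarrow> nat)" where
  "perm_prod \<sigma>s B = foldr (\<circ>) (map \<sigma>s (sorted_list_of_set B)) id"

definition kappa :: "(nat \<Rightarrow> nat list \<Rightarrow> real) \<Rightarrow> nat \<Rightarrow> nat \<Rightarrow> (nat \<Rightarrow> (nat \<Rightarrow> nat)) \<Rightarrow> real" where
  "kappa \<rho> n r \<sigma>s = (\<Sum>P | partition_on {..<r} P.
      (-1) ^ (card P - 1) * fact (card P - 1) * (\<Prod>B\<in>P. Mrho \<rho> n (perm_prod \<sigma>s B)))"

text \<open>Multi-indices \<^term>\<open>i :: nat \<Rightarrow> nat\<close> for the variables x_1, x_2, ...: finitely supported, i 0 = 0.\<close>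
definition mindex :: "(nat \<Rightarrow> nat) \<Rightarrow> bool" where
  "mindex i \<longleftrightarrow> i 0 = 0 \<and> finite {k. i k \<noteq> 0}"

definition mfact :: "(nat \<Rightarrow> nat) \<Rightarrow> real" where
  "mfact i = (\<Prod>k | i k \<noteq> 0. fact (i k))"

definition morder :: "(nat \<Rightarrow> nat) \<Rightarrow> nat" where
  "morder i = (\<Sum>k | i k \<noteq> 0. i k)"

definition unit_index :: "nat \<Rightarrow> (nat \<Rightarrow> nat)" where
  "unit_index k = (\<lambda>j. if j = k then 1 else 0)"

text \<open>Derivative \<partial>^i A_\<rho> at 0 = i! [x^i] A = M_\<rho>(\<sigma>_i) \<Prod>_k n^{i_k(k-1)/2}.\<close>
definition Aderiv :: "(nat \<Rightarrow> nat list \<Rightarrow> real) \<Rightarrow> nat \<Rightarrow> (nat \<Rightarrow> nat) \<Rightarrow> real" where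
  "Aderiv \<rho> n i = Mrho \<rho> n (SOME \<sigma>. finperm \<sigma> \<and> (\<forall>k\<ge>2. ncyc \<sigma> k = i k))
      * (\<Prod>k | i k \<noteq> 0. real n powr (real (i k) * (real k - 1) / 2))"

text \<open>Coefficient [x^i] of ln A = ln(1 + B), B = A - 1, via \<Sum>_{m\<ge>1} (-1)^{m-1} B^m / m.\<close>
definition lnA_coeff :: "(nat \<Rightarrow> nat list \<Rightarrow> real) \<Rightarrow> nat \<Rightarrow> (nat \<Rightarrow> nat) \<Rightarrow> real" where
  "lnA_coeff \<rho> n i = (\<Sum>m\<in>{1..morder i}. (-1) ^ (m - 1) / real m *
      (\<Sum>js \<in> {js \<in> {..<m} \<rightarrow>\<^sub>E {j. j \<le> i}.
             (\<forall>t<m. js t \<noteq> (\<lambda>_. 0)) \<and> (\<forall>k. (\<Sum>t<m. js t k) = i k)}.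
         \<Prod>t<m. Aderiv \<rho> n (js t) / mfact (js t)))"

definition lnA_deriv :: "(nat \<Rightarrow> nat list \<Rightarrow> real) \<Rightarrow> nat \<Rightarrow> (nat \<Rightarrow> nat) \<Rightarrow> real" where
  "lnA_deriv \<rho> n i = mfact i * lnA_coeff \<rho> n i"

definition LLN_appropriate :: "(nat \<Rightarrow> nat list \<Rightarrow> real) \<Rightarrow> bool" where
  "LLN_appropriate \<rho> \<longleftrightarrow> (\<exists>c :: nat \<Rightarrow> real.
     (\<forall>k\<ge>1. (\<lambda>n. lnA_deriv \<rho> n (unit_index k)) \<longlonglongrightarrow> c k) \<and>
     (\<forall>i. mindex i \<and> 2 \<le> morder i \<longrightarrow> (\<lambda>n. lnA_deriv \<rho> n i) \<longlonglongrightarrow> 0))"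

end

theory Submission
  imports Defs
begin


lemma finperm_iff: "finperm \<sigma> \<longleftrightarrow> permutation \<sigma>"
  by (simp add: finperm_def permutation supp_def)

lemma cyc_len_lp: "cyc_len \<sigma> x = least_power \<sigma> x"
  unfolding cyc_len_def least_power_def by (simp add: conj_commute)

lemma card_support: "permutation p \<Longrightarrow> card (set (support p a)) = least_power p a"
proof -
  assume p: "permutation p"
  have "card (set (support p a)) = length (support p a)"
    by (rule distinct_card[OF cycle_of_permutation[OF p]])
  then show ?thesis by simp
qed

lemma a_in_support: "permutation p \<Longrightarrow> a \<in> set (support p a)"
  using least_power_of_permutation(2)[of p a] by force

lemma support_eq:
  assumes "permutation p" "b \<in> set (support p a)"
  shows "set (support p b) = set (support p a)"
proof -
  have "set (support p b) \<inter> set (support p a) \<noteq> {}"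
    using a_in_support[OF assms(1), of b] assms(2) by blast
  then show ?thesis using disjoint_support[OF assms(1)] unfolding disjoint_def by blast
qed

lemma lp_eq:
  assumes "permutation p" "b \<in> set (support p a)"
  shows "least_power p b = least_power p a"
  using card_support[OF assms(1)] support_eq[OF assms] by metis

lemma support_in_supp:
  assumes "permutation p" "p a \<noteq> a"
  shows "set (support p a) \<subseteq> supp p"
  using support_coverture[OF assms(1)] assms(2) unfolding supp_def by blast

lemma card_Ck:
  assumes p: "permutation p"
  shows "card {x \<in> supp p. cyc_len p x = k} = k * ncyc p k"
proof -
  let ?C = "{x \<in> supp p. cyc_len p x = k}"
  let ?O = "(\<lambda>a. set (support p a)) ` ?C"
  have fin: "finite (supp p)" using p by (simp add: permutation supp_def)
  have U: "\<Union>?O = ?C"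
  proof
    show "\<Union>?O \<subseteq> ?C"
    proof
      fix b assume "b \<in> \<Union>?O"
      then obtain a where a: "a \<in> ?C" "b \<in> set (support p a)" by auto
      have "b \<in> supp p" using support_in_supp[OF p, of a] a by (auto simp: supp_def)
      moreover have "cyc_len p b = k" using lp_eq[OF p a(2)] a(1) by (simp add: cyc_len_lp)
      ultimately show "b \<in> ?C" by simp
    qed
  next
    show "?C \<subseteq> \<Union>?O" using a_in_support[OF p] by blast
  qed
  have finO: "finite ?O" using fin by simp
  have disj: "pairwise disjnt ?O"
    using disjoint_support[OF p] unfolding disjoint_def pairwise_def disjnt_def by blast
  have cards: "\<And>X. X \<in> ?O \<Longrightarrow> card X = k"
    using card_support[OF p] by (auto simp: cyc_len_lp)
  have "card ?C = sum card ?O"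
    using card_Union_disjoint[OF disj] U finO by (metis (no_types, lifting) List.finite_set finite_imageD imageE)
  also have "\<dots> = k * card ?O" using cards by simp
  finally have eq: "card ?C = k * card ?O" .
  show ?thesis
  proof (cases "k = 0")
    case True
    then have "?C = {}" using least_power_of_permutation(2)[OF p] by (auto simp: cyc_len_lp)
    moreover have "ncyc p 0 = 0" by (simp add: ncyc_def)
    ultimately show ?thesis using True by (metis card.empty mult_0)
  next
    case False
    then show ?thesis using eq by (simp add: ncyc_def)
  qed
qed

lemma card_supp_sum:
  assumes p: "permutation p" and M: "card (supp p) \<le> M"
  shows "card (supp p) = (\<Sum>k\<in>{2..M}. k * ncyc p k)"
proof -
  have fin: "finite (supp p)" using p by (simp add: permutation supp_def)
  have lp2: "2 \<le> cyc_len p x" "cyc_len p x \<le> M" if "x \<in> supp p" for x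
  proof -
    show "2 \<le> cyc_len p x" using least_power_gt_one[OF p, of x] that by (simp add: supp_def cyc_len_lp)
    have "set (support p x) \<subseteq> supp p" using support_in_supp[OF p, of x] that by (simp add: supp_def)
    then have "card (set (support p x)) \<le> card (supp p)" using fin by (simp add: card_mono)
    then show "cyc_len p x \<le> M" using card_support[OF p, of x] M by (simp add: cyc_len_lp)
  qed
  have U: "supp p = (\<Union>k\<in>{2..M}. {x \<in> supp p. cyc_len p x = k})"
    using lp2 by auto
  have "card (supp p) = (\<Sum>k\<in>{2..M}. card {x \<in> supp p. cyc_len p x = k})"
    by (subst U, rule card_UN_disjoint) (use fin in auto)
  also have "\<dots> = (\<Sum>k\<in>{2..M}. k * ncyc p k)" using card_Ck[OF p] by simp
  finally show ?thesis .
qed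

lemma card_supp_eq:
  assumes p: "permutation p" and q: "permutation q" and eq: "\<forall>k\<ge>2. ncyc p k = ncyc q k"
  shows "card (supp p) = card (supp q)"
proof -
  let ?M = "max (card (supp p)) (card (supp q))"
  have "card (supp p) = (\<Sum>k\<in>{2..?M}. k * ncyc p k)" by (rule card_supp_sum[OF p]) simp
  also have "\<dots> = (\<Sum>k\<in>{2..?M}. k * ncyc q k)" using eq by (intro sum.cong) auto
  also have "\<dots> = card (supp q)" by (rule card_supp_sum[OF q, symmetric]) simp
  finally show ?thesis .
qed

lemma cond_iff:
  assumes s: "finperm \<sigma>"
  shows "(\<exists>\<tau> g. \<tau> permutes {..<n} \<and> finperm g \<and> \<sigma> = g \<circ> \<tau> \<circ> inv g) \<longleftrightarrow> card (supp \<sigma>) \<le> n"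
proof
  assume "\<exists>\<tau> g. \<tau> permutes {..<n} \<and> finperm g \<and> \<sigma> = g \<circ> \<tau> \<circ> inv g"
  then obtain \<tau> g where t: "\<tau> permutes {..<n}" and g: "finperm g" and sg: "\<sigma> = g \<circ> \<tau> \<circ> inv g" by blast
  have bg: "bij g" using g by (simp add: finperm_def)
  have "supp \<sigma> \<subseteq> g ` {..<n}"
  proof
    fix x assume "x \<in> supp \<sigma>"
    then have "g (\<tau> (inv g x)) \<noteq> x" by (simp add: supp_def sg)
    then have "\<tau> (inv g x) \<noteq> inv g x" using bg by (auto simp: surj_f_inv_f bij_is_surj)
    then have "inv g x \<in> {..<n}" using t by (meson permutes_def)
    moreover have "x = g (inv g x)" using bg by (simp add: surj_f_inv_f bij_is_surj)
    ultimately show "x \<in> g ` {..<n}" by blast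
  qed
  then show "card (supp \<sigma>) \<le> n"
  proof -
    have "card (supp \<sigma>) \<le> card (g ` {..<n})" using \<open>supp \<sigma> \<subseteq> g ` {..<n}\<close> by (intro card_mono) auto
    also have "\<dots> \<le> n" using card_image_le[of "{..<n}" g] by simp
    finally show ?thesis .
  qed
next
  assume c: "card (supp \<sigma>) \<le> n"
  have fin: "finite (supp \<sigma>)" using s by (simp add: finperm_def)
  define A where "A = supp \<sigma> - {..<n}"
  define B where "B = {..<n} - supp \<sigma>"
  have finA: "finite A" using fin by (simp add: A_def)
  have "card (supp \<sigma>) = card (supp \<sigma> \<inter> {..<n}) + card A"
  proof -
    have "supp \<sigma> = (supp \<sigma> \<inter> {..<n}) \<union> A" by (auto simp: A_def)
    moreover have "(supp \<sigma> \<inter> {..<n}) \<inter> A = {}" by (auto simp: A_def)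
    ultimately show ?thesis using fin finA card_Un_disjoint[of "supp \<sigma> \<inter> {..<n}" A] by simp
  qed
  moreover have "n = card (supp \<sigma> \<inter> {..<n}) + card B"
  proof -
    have "{..<n} = (supp \<sigma> \<inter> {..<n}) \<union> B" by (auto simp: B_def)
    moreover have "(supp \<sigma> \<inter> {..<n}) \<inter> B = {}" by (auto simp: B_def)
    ultimately show ?thesis using card_Un_disjoint[of "supp \<sigma> \<inter> {..<n}" B] by (simp add: B_def)
  qed
  ultimately have "card A \<le> card B" using c by linarith
  then obtain h where h: "h ` A \<subseteq> B" "inj_on h A"
    using card_le_inj[OF finA, of B] by (auto simp: B_def)
  define g where "g x = (if x \<in> A then h x else if x \<in> h ` A then inv_into A h x else x)" for x
  have AB: "A \<inter> B = {}" unfolding A_def B_def by auto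
  have gg: "g (g x) = x" for x
  proof (cases "x \<in> A")
    case True
    then have "h x \<notin> A" using h AB by blast
    then show ?thesis using True h by (simp add: g_def)
  next
    case False
    show ?thesis
    proof (cases "x \<in> h ` A")
      case True
      then have "inv_into A h x \<in> A" by (simp add: inv_into_into)
      then show ?thesis using True False h by (simp add: g_def f_inv_into_f)
    next
      case False2: False
      then show ?thesis using False by (simp add: g_def)
    qed
  qed
  have gcomp: "g \<circ> g = id" using gg by auto
  have bg: "bij g" using o_bij[OF gcomp gcomp] .
  have invg: "inv g = g" using inv_unique_comp[OF gcomp gcomp] .
  have suppg: "supp g \<subseteq> A \<union> h ` A" by (auto simp: supp_def g_def)
  have fg: "finperm g" using bg suppg finA by (simp add: finperm_def finite_subset)
  define \<tau> where "\<tau> = g \<circ> \<sigma> \<circ> g"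
  have bs: "bij \<sigma>" using s by (simp add: finperm_def)
  have bt: "bij \<tau>" unfolding \<tau>_def using bg bs by (simp add: bij_comp)
  have gs: "g y < n" if "y \<in> supp \<sigma>" for y
  proof (cases "y \<in> A")
    case True
    then show ?thesis using h unfolding g_def B_def by auto
  next
    case False
    then have "y < n" using that by (auto simp: A_def)
    moreover have "y \<notin> h ` A" using h that unfolding B_def by auto
    ultimately show ?thesis using False by (simp add: g_def)
  qed
  have tfix: "\<tau> x = x" if "x \<notin> {..<n}" for x
  proof (rule ccontr)
    assume "\<tau> x \<noteq> x"
    then have "\<sigma> (g x) \<noteq> g x" unfolding \<tau>_def using gg by auto
    then have "g (g x) < n" using gs by (simp add: supp_def)
    then show False using that gg by simp
  qed
  have "\<tau> permutes {..<n}" unfolding permutes_def using bt tfix by (simp add: bij_iff)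
  moreover have "\<sigma> = g \<circ> \<tau> \<circ> inv g" unfolding \<tau>_def invg by (simp add: fun_eq_iff gg)
  ultimately show "\<exists>\<tau> g. \<tau> permutes {..<n} \<and> finperm g \<and> \<sigma> = g \<circ> \<tau> \<circ> inv g" using fg by blast
qed

lemma Mrho_inv:
  assumes p: "finperm p" and q: "finperm q" and eq: "\<forall>k\<ge>2. ncyc p k = ncyc q k"
  shows "Mrho \<rho> n p = Mrho \<rho> n q"
proof -
  have c: "card (supp p) = card (supp q)" using card_supp_eq[of p q] p q eq unfolding finperm_iff by blast
  have m: "map (\<lambda>k. replicate (ncyc p k) k) [2..<card (supp q) + 1] = map (\<lambda>k. replicate (ncyc q k) k) [2..<card (supp q) + 1]"
    by (rule map_cong) (auto simp: eq)
  have ct: "ctype n p = ctype n q" unfolding ctype_def c m ..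
  have cc: "(\<exists>\<tau> g. \<tau> permutes {..<n} \<and> finperm g \<and> p = g \<circ> \<tau> \<circ> inv g) \<longleftrightarrow>
     (\<exists>\<tau> g. \<tau> permutes {..<n} \<and> finperm g \<and> q = g \<circ> \<tau> \<circ> inv g)"
    using cond_iff[OF p, of n] cond_iff[OF q, of n] c by simp
  show ?thesis unfolding Mrho_def ct using cc by simp
qed



lemma cycle_pow_nth:
  assumes "distinct cs" "i < length cs"
  shows "(cycle_of_list cs ^^ t) (cs ! i) = cs ! ((t + i) mod length cs)"
proof -
  have e: "map (cycle_of_list cs ^^ t) cs = rotate t cs"
    by (rule cyclic_rotation[OF assms(1)])
  have "(cycle_of_list cs ^^ t) (cs ! i) = map (cycle_of_list cs ^^ t) cs ! i"
    using assms(2) by (simp only: nth_map)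
  also have "\<dots> = rotate t cs ! i" by (simp only: e)
  also have "\<dots> = cs ! ((t + i) mod length cs)" using assms(2) by (rule nth_rotate)
  finally show ?thesis .
qed

lemma mod_shift:
  fixes d k i :: nat
  assumes "0 < d" "d < k" "i < k"
  shows "(d + i) mod k \<noteq> i"
proof (cases "d + i < k")
  case True
  then show ?thesis using assms by simp
next
  case False
  then have "(d + i) mod k = (d + i - k) mod k" using False by (intro le_mod_geq) simp
  also have "\<dots> = d + i - k" using assms False by simp
  finally show ?thesis using assms False by simp
qed

lemma is_cycle_props:
  assumes c: "is_cycle k \<sigma>" and k: "1 \<le> k"
  shows "permutation \<sigma>" "\<And>x. x \<in> supp \<sigma> \<Longrightarrow> cyc_len \<sigma> x = k"
    "card (supp \<sigma>) = (if 2 \<le> k then k else 0)"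
proof -
  obtain cs where cs: "distinct cs" "length cs = k" "\<sigma> = cycle_of_list cs"
    using c unfolding is_cycle_def by blast
  show p: "permutation \<sigma>" using cs permutation_of_cycle by simp
  have supp_sub: "supp \<sigma> \<subseteq> set cs" using id_outside_supp[of _ cs] cs(3) by (auto simp: supp_def)
  show "cyc_len \<sigma> x = k" if x: "x \<in> supp \<sigma>" for x
  proof -
    have "x \<in> set cs" using supp_sub x by blast
    then obtain i where i: "i < k" "x = cs ! i" using cs(2) by (auto simp: in_set_conv_nth)
    have pow: "(\<sigma> ^^ t) x = x \<longleftrightarrow> (t + i) mod k = i" for t
    proof -
      have "(\<sigma> ^^ t) x = cs ! ((t + i) mod k)" using cycle_pow_nth[OF cs(1), of i t] i cs(2,3) by simp
      moreover have "(t + i) mod k < k" using i(1) by simp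
      ultimately show ?thesis using nth_eq_iff_index_eq[OF cs(1), of "(t + i) mod k" i] i cs(2) by simp
    qed
    have "(\<sigma> ^^ k) x = x" using pow i by simp
    then have d: "least_power \<sigma> x dvd k" using least_power_dvd[OF p] by blast
    have pos: "0 < least_power \<sigma> x" using least_power_of_permutation(2)[OF p] .
    have "(\<sigma> ^^ least_power \<sigma> x) x = x" using least_power_of_permutation(1)[OF p] .
    then have "(least_power \<sigma> x + i) mod k = i" using pow by simp
    moreover have "least_power \<sigma> x \<le> k" using d k by (simp add: dvd_imp_le)
    ultimately have "least_power \<sigma> x = k"
      using pos i(1) mod_shift[of "least_power \<sigma> x" k i] by fastforce
    then show ?thesis by (simp add: cyc_len_lp)
  qed
  show "card (supp \<sigma>) = (if 2 \<le> k then k else 0)"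
  proof (cases "2 \<le> k")
    case True
    have "set cs \<subseteq> supp \<sigma>"
    proof
      fix x assume "x \<in> set cs"
      then obtain i where i: "i < k" "x = cs ! i" using cs(2) by (auto simp: in_set_conv_nth)
      have "(\<sigma> ^^ 1) x = cs ! ((1 + i) mod k)" using cycle_pow_nth[OF cs(1), of i 1] i cs by simp
      moreover have "(1 + i) mod k \<noteq> i" using True i(1) mod_shift[of 1 k i] by simp
      moreover have "(1 + i) mod k < k" using i(1) by simp
      ultimately have "\<sigma> x \<noteq> x" using i cs(2) nth_eq_iff_index_eq[OF cs(1), of "(1 + i) mod k" i] by simp
      then show "x \<in> supp \<sigma>" by (simp add: supp_def)
    qed
    then have "supp \<sigma> = set cs" using supp_sub by blast
    then show ?thesis using True cs by (simp add: distinct_card)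
  next
    case False
    then have "k = 1" using k by simp
    then obtain a where "cs = [a]" using cs(2) by (cases cs) auto
    then have "\<sigma> = id" using cs(3) by simp
    then show ?thesis using False by (simp add: supp_def)
  qed
qed



lemma perm_in_supp: "permutation \<sigma> \<Longrightarrow> x \<in> supp \<sigma> \<Longrightarrow> \<sigma> x \<in> supp \<sigma>"
proof -
  assume a: "permutation \<sigma>" "x \<in> supp \<sigma>"
  have "inj \<sigma>" using a(1) by (simp add: permutation bij_is_inj)
  then show ?thesis using a(2) by (auto simp: supp_def dest: injD)
qed

lemma foldr_props:
  assumes "distinct L" "\<forall>j\<in>set L. permutation (\<sigma>s j)"
    "\<forall>j\<in>set L. \<forall>j'\<in>set L. j \<noteq> j' \<longrightarrow> supp (\<sigma>s j) \<inter> supp (\<sigma>s j') = {}"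
  shows "permutation (foldr (\<circ>) (map \<sigma>s L) id) \<and>
    (\<forall>j\<in>set L. \<forall>x\<in>supp (\<sigma>s j). foldr (\<circ>) (map \<sigma>s L) id x = \<sigma>s j x) \<and>
    (\<forall>x. (\<forall>j\<in>set L. x \<notin> supp (\<sigma>s j)) \<longrightarrow> foldr (\<circ>) (map \<sigma>s L) id x = x)"
  using assms
proof (induction L)
  case Nil
  then show ?case by (simp add: permutation_id)
next
  case (Cons l L)
  let ?P = "foldr (\<circ>) (map \<sigma>s L) id"
  have IH: "permutation ?P" "\<forall>j\<in>set L. \<forall>x\<in>supp (\<sigma>s j). ?P x = \<sigma>s j x"
    "\<forall>x. (\<forall>j\<in>set L. x \<notin> supp (\<sigma>s j)) \<longrightarrow> ?P x = x"
  proof -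
    have "distinct L" "\<forall>j\<in>set L. permutation (\<sigma>s j)"
      "\<forall>j\<in>set L. \<forall>j'\<in>set L. j \<noteq> j' \<longrightarrow> supp (\<sigma>s j) \<inter> supp (\<sigma>s j') = {}"
      using Cons.prems by auto
    note H = Cons.IH[OF this]
    show "permutation ?P" using H by blast
    show "\<forall>j\<in>set L. \<forall>x\<in>supp (\<sigma>s j). ?P x = \<sigma>s j x" using H by blast
    show "\<forall>x. (\<forall>j\<in>set L. x \<notin> supp (\<sigma>s j)) \<longrightarrow> ?P x = x" using H by blast
  qed
  have pl: "permutation (\<sigma>s l)" using Cons.prems by simp
  have eq: "foldr (\<circ>) (map \<sigma>s (l # L)) id = \<sigma>s l \<circ> ?P" by simp
  have A: "permutation (\<sigma>s l \<circ> ?P)" using pl IH(1) by (rule permutation_compose)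
  have B: "(\<sigma>s l \<circ> ?P) x = \<sigma>s j x" if j: "j \<in> set (l # L)" and x: "x \<in> supp (\<sigma>s j)" for j x
  proof (cases "j = l")
    case True
    have "\<forall>j'\<in>set L. x \<notin> supp (\<sigma>s j')" using Cons.prems(1,3) x True by auto
    then show ?thesis using IH(3) True by simp
  next
    case False
    then have jL: "j \<in> set L" using j by simp
    have pj: "permutation (\<sigma>s j)" using Cons.prems(2) jL by simp
    have "\<sigma>s j x \<in> supp (\<sigma>s j)" using perm_in_supp[OF pj x] .
    then have "\<sigma>s j x \<notin> supp (\<sigma>s l)" using Cons.prems(3) jL False by auto
    then show ?thesis using IH(2) jL x by (simp add: supp_def)
  qed
  have C: "(\<sigma>s l \<circ> ?P) x = x" if "\<forall>j\<in>set (l # L). x \<notin> supp (\<sigma>s j)" for x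
    using that IH(3) by (simp add: supp_def)
  show ?case unfolding eq using A B C by blast
qed

definition cyc_sys :: "nat \<Rightarrow> (nat \<Rightarrow> nat) \<Rightarrow> (nat \<Rightarrow> nat \<Rightarrow> nat) \<Rightarrow> bool" where
  "cyc_sys r len \<sigma>s \<longleftrightarrow> (\<forall>j<r. 1 \<le> len j \<and> is_cycle (len j) (\<sigma>s j)) \<and>
     (\<forall>j<r. \<forall>j'<r. j \<noteq> j' \<longrightarrow> supp (\<sigma>s j) \<inter> supp (\<sigma>s j') = {})"

lemma cyc_sys_disj:
  assumes "cyc_sys r len \<sigma>s" "B \<subseteq> {..<r}" "j \<in> B" "j' \<in> B" "j \<noteq> j'"
  shows "supp (\<sigma>s j) \<inter> supp (\<sigma>s j') = {}"
proof -
  have "j < r" "j' < r" using assms(2-4) by auto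
  then show ?thesis using assms(1,5) unfolding cyc_sys_def by blast
qed

lemma perm_prod_props:
  assumes cs: "cyc_sys r len \<sigma>s" and B: "B \<subseteq> {..<r}"
  shows "permutation (perm_prod \<sigma>s B)"
    "\<And>j x. j \<in> B \<Longrightarrow> x \<in> supp (\<sigma>s j) \<Longrightarrow> perm_prod \<sigma>s B x = \<sigma>s j x"
    "\<And>x. (\<forall>j\<in>B. x \<notin> supp (\<sigma>s j)) \<Longrightarrow> perm_prod \<sigma>s B x = x"
proof -
  have fin: "finite B" using B finite_subset by blast
  have p: "\<forall>j\<in>set (sorted_list_of_set B). permutation (\<sigma>s j)"
    using cs B fin is_cycle_props(1) unfolding cyc_sys_def by auto
  have d: "\<forall>j\<in>set (sorted_list_of_set B). \<forall>j'\<in>set (sorted_list_of_set B). j \<noteq> j' \<longrightarrow> supp (\<sigma>s j) \<inter> supp (\<sigma>s j') = {}"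
    using cyc_sys_disj[OF cs B] fin by auto
  note F = foldr_props[OF distinct_sorted_list_of_set p d]
  show "permutation (perm_prod \<sigma>s B)" using F by (simp add: perm_prod_def)
  show "perm_prod \<sigma>s B x = \<sigma>s j x" if "j \<in> B" "x \<in> supp (\<sigma>s j)" for j x
    using F that fin by (simp add: perm_prod_def)
  show "perm_prod \<sigma>s B x = x" if "\<forall>j\<in>B. x \<notin> supp (\<sigma>s j)" for x
    using F that fin by (simp add: perm_prod_def)
qed

lemma perm_prod_pow:
  assumes cs: "cyc_sys r len \<sigma>s" and B: "B \<subseteq> {..<r}" and j: "j \<in> B" and x: "x \<in> supp (\<sigma>s j)"
  shows "(perm_prod \<sigma>s B ^^ t) x = (\<sigma>s j ^^ t) x \<and> (\<sigma>s j ^^ t) x \<in> supp (\<sigma>s j)"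
proof (induction t)
  case 0
  then show ?case using x by simp
next
  case (Suc t)
  have pj: "permutation (\<sigma>s j)" using cs B j is_cycle_props(1) unfolding cyc_sys_def by auto
  show ?case using Suc perm_prod_props(2)[OF cs B j] perm_in_supp[OF pj] by simp
qed

lemma perm_prod_supp:
  assumes cs: "cyc_sys r len \<sigma>s" and B: "B \<subseteq> {..<r}"
  shows "supp (perm_prod \<sigma>s B) = (\<Union>j\<in>B. supp (\<sigma>s j))"
proof
  show "supp (perm_prod \<sigma>s B) \<subseteq> (\<Union>j\<in>B. supp (\<sigma>s j))"
    using perm_prod_props(3)[OF cs B] by (auto simp: supp_def)
  show "(\<Union>j\<in>B. supp (\<sigma>s j)) \<subseteq> supp (perm_prod \<sigma>s B)"
    using perm_prod_props(2)[OF cs B] by (auto simp: supp_def)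
qed

lemma perm_prod_ncyc:
  assumes cs: "cyc_sys r len \<sigma>s" and B: "B \<subseteq> {..<r}" and k: "2 \<le> k"
  shows "ncyc (perm_prod \<sigma>s B) k = card {j \<in> B. len j = k}"
proof -
  let ?P = "perm_prod \<sigma>s B"
  let ?J = "{j \<in> B. len j = k}"
  have fin: "finite B" using B finite_subset by blast
  have cj: "1 \<le> len j" "is_cycle (len j) (\<sigma>s j)" if "j \<in> B" for j
    using cs B that unfolding cyc_sys_def by auto
  have cl: "cyc_len ?P x = cyc_len (\<sigma>s j) x" if "j \<in> B" "x \<in> supp (\<sigma>s j)" for j x
    unfolding cyc_len_def using perm_prod_pow[OF cs B that] by simp
  have C: "{x \<in> supp ?P. cyc_len ?P x = k} = (\<Union>j\<in>?J. supp (\<sigma>s j))"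
  proof
    show "{x \<in> supp ?P. cyc_len ?P x = k} \<subseteq> (\<Union>j\<in>?J. supp (\<sigma>s j))"
    proof
      fix x assume x: "x \<in> {x \<in> supp ?P. cyc_len ?P x = k}"
      then obtain j where j: "j \<in> B" "x \<in> supp (\<sigma>s j)" using perm_prod_supp[OF cs B] by auto
      have "len j = k" using x cl[OF j] is_cycle_props(2)[OF cj(2)[OF j(1)] cj(1)[OF j(1)] j(2)] by simp
      then show "x \<in> (\<Union>j\<in>?J. supp (\<sigma>s j))" using j by auto
    qed
    show "(\<Union>j\<in>?J. supp (\<sigma>s j)) \<subseteq> {x \<in> supp ?P. cyc_len ?P x = k}"
    proof
      fix x assume "x \<in> (\<Union>j\<in>?J. supp (\<sigma>s j))"
      then obtain j where j: "j \<in> B" "len j = k" "x \<in> supp (\<sigma>s j)" by auto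
      have "cyc_len ?P x = k" using cl[OF j(1,3)] is_cycle_props(2)[OF cj(2)[OF j(1)] cj(1)[OF j(1)] j(3)] j(2) by simp
      then show "x \<in> {x \<in> supp ?P. cyc_len ?P x = k}" using j perm_prod_supp[OF cs B] by auto
    qed
  qed
  have cards: "card (supp (\<sigma>s j)) = k" if "j \<in> ?J" for j
    using is_cycle_props(3)[OF cj(2) cj(1), of j] that k by auto
  have finS: "finite (supp (\<sigma>s j))" if "j \<in> ?J" for j
  proof (rule ccontr)
    assume "infinite (supp (\<sigma>s j))"
    then have "card (supp (\<sigma>s j)) = 0" by simp
    then show False using cards[OF that] k by simp
  qed
  have "card {x \<in> supp ?P. cyc_len ?P x = k} = (\<Sum>j\<in>?J. card (supp (\<sigma>s j)))"
    unfolding C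
    by (rule card_UN_disjoint) (use fin finS cyc_sys_disj[OF cs B] in auto)
  also have "\<dots> = k * card ?J" using cards by simp
  finally show ?thesis unfolding ncyc_def using k by simp
qed



definition ltyp :: "(nat \<Rightarrow> nat) \<Rightarrow> nat set \<Rightarrow> nat \<Rightarrow> nat" where
  "ltyp len S = (\<lambda>k. card {j \<in> S. len j = k})"

lemma sum_by_len:
  fixes f :: "nat \<Rightarrow> real"
  assumes "finite B"
  shows "(\<Sum>j\<in>B. f (len j)) = (\<Sum>k | ltyp len B k \<noteq> 0. real (ltyp len B k) * f k)"
proof -
  have T: "{k. ltyp len B k \<noteq> 0} = len ` B"
  proof
    show "{k. ltyp len B k \<noteq> 0} \<subseteq> len ` B"
    proof
      fix k assume "k \<in> {k. ltyp len B k \<noteq> 0}"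
      then have "card {j \<in> B. len j = k} \<noteq> 0" by (simp add: ltyp_def)
      then have "{j \<in> B. len j = k} \<noteq> {}" by (intro notI) simp
      then show "k \<in> len ` B" by auto
    qed
    show "len ` B \<subseteq> {k. ltyp len B k \<noteq> 0}"
    proof
      fix k assume "k \<in> len ` B"
      then obtain j where "j \<in> B" "len j = k" by auto
      then have "{j \<in> B. len j = k} \<noteq> {}" by auto
      then show "k \<in> {k. ltyp len B k \<noteq> 0}" using assms by (simp add: ltyp_def)
    qed
  qed
  have "(\<Sum>j\<in>B. f (len j)) = (\<Sum>k\<in>len ` B. \<Sum>j\<in>{j \<in> B. len j = k}. f (len j))"
    by (rule sum.group[symmetric]) (use assms in auto)
  also have "\<dots> = (\<Sum>k\<in>len ` B. real (ltyp len B k) * f k)"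
    by (intro sum.cong refl) (simp add: ltyp_def)
  finally show ?thesis unfolding T .
qed

lemma F1:
  assumes cs: "cyc_sys r len \<sigma>s" and B: "B \<subseteq> {..<r}" and n: "1 \<le> n"
  shows "Aderiv \<rho> n (ltyp len B) = Mrho \<rho> n (perm_prod \<sigma>s B) * real n powr ((\<Sum>j\<in>B. real (len j) - 1) / 2)"
proof -
  have fin: "finite B" using B finite_subset by blast
  let ?P = "perm_prod \<sigma>s B"
  have wit: "finperm ?P \<and> (\<forall>k\<ge>2. ncyc ?P k = ltyp len B k)"
    using perm_prod_props(1)[OF cs B] perm_prod_ncyc[OF cs B] by (simp add: finperm_iff ltyp_def)
  define \<sigma>' where "\<sigma>' = (SOME \<sigma>. finperm \<sigma> \<and> (\<forall>k\<ge>2. ncyc \<sigma> k = ltyp len B k))"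
  have s': "finperm \<sigma>' \<and> (\<forall>k\<ge>2. ncyc \<sigma>' k = ltyp len B k)"
    unfolding \<sigma>'_def by (rule someI[of _ ?P]) (rule wit)
  have M: "Mrho \<rho> n \<sigma>' = Mrho \<rho> n ?P"
    by (rule Mrho_inv) (use s' wit in auto)
  have "(\<Prod>k | ltyp len B k \<noteq> 0. real n powr (real (ltyp len B k) * (real k - 1) / 2))
      = real n powr (\<Sum>k | ltyp len B k \<noteq> 0. real (ltyp len B k) * (real k - 1) / 2)"
    using n by (simp add: powr_sum)
  also have "(\<Sum>k | ltyp len B k \<noteq> 0. real (ltyp len B k) * (real k - 1) / 2) = (\<Sum>j\<in>B. real (len j) - 1) / 2"
    using sum_by_len[OF fin, where f="\<lambda>k. (real k - 1) / 2" and len=len] by (simp add: sum_divide_distrib)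
  finally have pw: "(\<Prod>k | ltyp len B k \<noteq> 0. real n powr (real (ltyp len B k) * (real k - 1) / 2)) =
     real n powr ((\<Sum>j\<in>B. real (len j) - 1) / 2)" .
  show ?thesis unfolding Aderiv_def \<sigma>'_def[symmetric] M pw ..
qed



definition Fs :: "(nat \<Rightarrow> nat) \<Rightarrow> nat set \<Rightarrow> nat \<Rightarrow> (nat \<Rightarrow> nat \<Rightarrow> nat) \<Rightarrow> (nat \<Rightarrow> nat) set" where
  "Fs len S m js = {f \<in> S \<rightarrow>\<^sub>E {..<m}. \<forall>t<m. ltyp len {j \<in> S. f j = t} = js t}"

definition qf :: "nat set \<Rightarrow> (nat \<Rightarrow> nat) \<Rightarrow> nat" where
  "qf K i = (\<Prod>k\<in>K. fact (i k))"

definition Qf :: "nat set \<Rightarrow> nat \<Rightarrow> (nat \<Rightarrow> nat \<Rightarrow> nat) \<Rightarrow> nat" where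
  "Qf K m js = (\<Prod>t<m. qf K (js t))"

lemma ltyp_insert:
  assumes "finite A" "x \<notin> A"
  shows "ltyp len (insert x A) k = ltyp len A k + (if len x = k then 1 else 0)"
proof -
  have "{j \<in> insert x A. len j = k} = (if len x = k then insert x {j \<in> A. len j = k} else {j \<in> A. len j = k})"
    by auto
  then show ?thesis using assms by (simp add: ltyp_def)
qed

lemma ltyp_empty: "ltyp len {} = (\<lambda>k. 0)"
  by (simp add: ltyp_def)

lemma qf_dec:
  assumes "finite K" "k0 \<in> K" "0 < i k0"
  shows "qf K i = i k0 * qf K (i(k0 := i k0 - 1))"
proof -
  have "qf K i = fact (i k0) * (\<Prod>k\<in>K - {k0}. fact (i k))"
    unfolding qf_def by (rule prod.remove[OF assms(1,2)])
  also have "fact (i k0) = i k0 * (fact (i k0 - 1) :: nat)"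
  proof -
    obtain c where c: "i k0 = Suc c" using assms(3) by (cases "i k0") auto
    then show ?thesis by (simp add: fact_Suc)
  qed
  also have "(\<Prod>k\<in>K - {k0}. fact (i k)) = (\<Prod>k\<in>K - {k0}. fact ((i(k0 := i k0 - 1)) k) :: nat)"
    by (intro prod.cong) auto
  also have "i k0 * fact (i k0 - 1) * \<dots> = i k0 * qf K (i(k0 := i k0 - 1))"
    unfolding qf_def using prod.remove[OF assms(1,2), of "\<lambda>k. fact ((i(k0 := i k0 - 1)) k) :: nat"] by simp
  finally show ?thesis .
qed

lemma qf_inc:
  assumes "finite K" "k0 \<in> K"
  shows "qf K (i(k0 := Suc (i k0))) = Suc (i k0) * qf K i"
proof -
  have "qf K (i(k0 := Suc (i k0))) = fact (Suc (i k0)) * (\<Prod>k\<in>K - {k0}. fact ((i(k0 := Suc (i k0))) k))"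
    unfolding qf_def using prod.remove[OF assms(1,2), of "\<lambda>k. fact ((i(k0 := Suc (i k0))) k) :: nat"] by simp
  also have "(\<Prod>k\<in>K - {k0}. fact ((i(k0 := Suc (i k0))) k)) = (\<Prod>k\<in>K - {k0}. fact (i k) :: nat)"
    by (intro prod.cong) auto
  also have "fact (Suc (i k0)) * \<dots> = Suc (i k0) * (fact (i k0) * (\<Prod>k\<in>K - {k0}. fact (i k)))"
    by (simp add: algebra_simps)
  also have "fact (i k0) * (\<Prod>k\<in>K - {k0}. fact (i k)) = qf K i"
    unfolding qf_def using prod.remove[OF assms(1,2), of "\<lambda>k. fact (i k) :: nat"] by simp
  finally show ?thesis .
qed

lemma Qf_dec:
  assumes "finite K" "k0 \<in> K" "t < m" "0 < js t k0"
  shows "Qf K m js = js t k0 * Qf K m (js(t := (js t)(k0 := js t k0 - 1)))"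
proof -
  let ?js' = "js(t := (js t)(k0 := js t k0 - 1))"
  have tm: "t \<in> {..<m}" using assms(3) by simp
  have "Qf K m js = qf K (js t) * (\<Prod>t'\<in>{..<m} - {t}. qf K (js t'))"
    unfolding Qf_def by (rule prod.remove[OF finite_lessThan tm])
  also have "qf K (js t) = js t k0 * qf K (?js' t)"
    using qf_dec[OF assms(1,2), of "js t"] assms(4) by simp
  also have "(\<Prod>t'\<in>{..<m} - {t}. qf K (js t')) = (\<Prod>t'\<in>{..<m} - {t}. qf K (?js' t'))"
    by (intro prod.cong) auto
  also have "js t k0 * qf K (?js' t) * \<dots> = js t k0 * Qf K m ?js'"
    unfolding Qf_def using prod.remove[OF finite_lessThan tm, of "\<lambda>t'. qf K (?js' t')"] by simp
  finally show ?thesis .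
qed


lemma fib_ins:
  assumes "finite S" "x \<notin> S" "f x = t"
  shows "ltyp len {j \<in> insert x S. f j = t'} k = ltyp len {j \<in> S. f j = t'} k + (if t' = t \<and> len x = k then 1 else 0)"
proof (cases "t' = t")
  case True
  have "{j \<in> insert x S. f j = t'} = insert x {j \<in> S. f j = t'}" using True assms by auto
  moreover have "finite {j \<in> S. f j = t'}" using assms by simp
  moreover have "x \<notin> {j \<in> S. f j = t'}" using assms by simp
  ultimately show ?thesis using True ltyp_insert by simp
next
  case False
  have "{j \<in> insert x S. f j = t'} = {j \<in> S. f j = t'}" using False assms by auto
  then show ?thesis using False by simp
qed

lemma count_types:
  assumes "finite S" "finite K" "len ` S \<subseteq> K"
  shows "(\<forall>k. (\<Sum>t<m. js t k) = ltyp len S k) \<Longrightarrow> card (Fs len S m js) * Qf K m js = qf K (ltyp len S)"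
  using assms
proof (induction S arbitrary: js rule: finite_induct)
  case empty
  have z: "js t = (\<lambda>k. 0)" if "t < m" for t
  proof
    fix k
    have "(\<Sum>t<m. js t k) = 0" using empty.prems(1) by (simp add: ltyp_empty)
    then show "js t k = 0" using that by simp
  qed
  have "Fs len {} m js = {\<lambda>_. undefined}"
    unfolding Fs_def using z by (auto simp: ltyp_empty)
  moreover have "Qf K m js = 1" unfolding Qf_def qf_def using z by simp
  moreover have "qf K (ltyp len {}) = 1" by (simp add: qf_def ltyp_empty)
  ultimately show ?case by simp
next
  case (insert x S)
  define k0 where "k0 = len x"
  have k0K: "k0 \<in> K" using insert.prems k0_def by auto
  have SK: "len ` S \<subseteq> K" using insert.prems by auto
  note ins = ltyp_insert[OF insert.hyps(1,2)]
  define js' where "js' t = js(t := (js t)(k0 := js t k0 - 1))" for t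
  define G where "G t = {f \<in> Fs len (insert x S) m js. f x = t}" for t
  have U: "Fs len (insert x S) m js = (\<Union>t\<in>{..<m}. G t)"
    unfolding G_def Fs_def by (auto simp: PiE_iff)
  have finF: "finite (Fs len A m js0)" if "finite A" for A js0
  proof -
    have "Fs len A m js0 \<subseteq> A \<rightarrow>\<^sub>E {..<m}" unfolding Fs_def by blast
    then show ?thesis using finite_PiE[OF that, of "\<lambda>_. {..<m}"] finite_subset by blast
  qed
  have finG: "finite (G t)" for t
    using finF[of "insert x S" js] insert.hyps(1) unfolding G_def by simp
  have cardU: "card (Fs len (insert x S) m js) = (\<Sum>t<m. card (G t))"
    unfolding U by (rule card_UN_disjoint) (use finG in \<open>auto simp: G_def\<close>)
  have G0: "G t = {}" if "js t k0 = 0" "t < m" for t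
  proof (rule ccontr)
    assume "G t \<noteq> {}"
    then obtain f where f: "f \<in> Fs len (insert x S) m js" "f x = t" unfolding G_def by auto
    then have "ltyp len {j \<in> insert x S. f j = t} = js t" using that(2) unfolding Fs_def by blast
    then have "ltyp len {j \<in> insert x S. f j = t} k0 = 0" using that(1) by simp
    then show False using fib_ins[where f=f and len=len and t'=t and k=k0, OF insert.hyps(1,2) f(2)] k0_def by simp
  qed
  have Gpos: "card (G t) = card (Fs len S m (js' t))" if pos: "0 < js t k0" and tm: "t < m" for t
  proof -
    have eqG: "G t = (\<lambda>g. g(x := t)) ` Fs len S m (js' t)"
    proof
      show "G t \<subseteq> (\<lambda>g. g(x := t)) ` Fs len S m (js' t)"
      proof
        fix f assume "f \<in> G t"
        then have f: "f \<in> insert x S \<rightarrow>\<^sub>E {..<m}" "\<forall>t'<m. ltyp len {j \<in> insert x S. f j = t'} = js t'" "f x = t"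
          unfolding G_def Fs_def by auto
        let ?g = "f(x := undefined)"
        have g1: "?g \<in> S \<rightarrow>\<^sub>E {..<m}" using f(1) insert.hyps(2) by (auto simp: PiE_iff)
        have g2: "ltyp len {j \<in> S. ?g j = t'} = js' t t'" if "t' < m" for t'
        proof
          fix k
          have e: "{j \<in> S. ?g j = t'} = {j \<in> S. f j = t'}" using insert.hyps(2) by auto
          have "js t' k = ltyp len {j \<in> S. f j = t'} k + (if t' = t \<and> len x = k then 1 else 0)"
            using f(2) that fib_ins[where f=f and len=len and t'=t' and k=k, OF insert.hyps(1,2) f(3)] by simp
          then show "ltyp len {j \<in> S. ?g j = t'} k = js' t t' k"
            unfolding e js'_def k0_def by auto
        qed
        have "?g \<in> Fs len S m (js' t)" unfolding Fs_def using g1 g2 by blast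
        moreover have "f = ?g(x := t)" using f(3) by auto
        ultimately show "f \<in> (\<lambda>g. g(x := t)) ` Fs len S m (js' t)" by blast
      qed
    next
      show "(\<lambda>g. g(x := t)) ` Fs len S m (js' t) \<subseteq> G t"
      proof
        fix f assume "f \<in> (\<lambda>g. g(x := t)) ` Fs len S m (js' t)"
        then obtain g where g: "g \<in> S \<rightarrow>\<^sub>E {..<m}" "\<forall>t'<m. ltyp len {j \<in> S. g j = t'} = js' t t'" "f = g(x := t)"
          unfolding Fs_def by auto
        have f1: "f \<in> insert x S \<rightarrow>\<^sub>E {..<m}" using g(1,3) tm by (auto simp: PiE_iff)
        have fx: "f x = t" using g(3) by simp
        have f2: "ltyp len {j \<in> insert x S. f j = t'} = js t'" if "t' < m" for t'
        proof
          fix k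
          have e: "{j \<in> S. f j = t'} = {j \<in> S. g j = t'}" using insert.hyps(2) g(3) by auto
          have "ltyp len {j \<in> insert x S. f j = t'} k = ltyp len {j \<in> S. g j = t'} k + (if t' = t \<and> len x = k then 1 else 0)"
            using fib_ins[where f=f and len=len and t'=t' and k=k, OF insert.hyps(1,2) fx] e by simp
          also have "\<dots> = js' t t' k + (if t' = t \<and> len x = k then 1 else 0)" using g(2) that by simp
          also have "\<dots> = js t' k" unfolding js'_def k0_def using pos k0_def by auto
          finally show "ltyp len {j \<in> insert x S. f j = t'} k = js t' k" .
        qed
        show "f \<in> G t" unfolding G_def Fs_def using f1 f2 fx by blast
      qed
    qed
    have inj: "inj_on (\<lambda>g. g(x := t)) (Fs len S m (js' t))"
    proof (rule inj_onI)
      fix g h assume "g \<in> Fs len S m (js' t)" "h \<in> Fs len S m (js' t)" "g(x := t) = h(x := t)"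
      moreover have "g x = undefined" "h x = undefined"
        using calculation(1,2) insert.hyps(2) unfolding Fs_def by (auto simp: PiE_iff extensional_def)
      ultimately show "g = h" by (metis fun_upd_triv fun_upd_upd)
    qed
    show ?thesis unfolding eqG using card_image[OF inj] .
  qed
  have each: "card (G t) * Qf K m js = js t k0 * qf K (ltyp len S)" if tm: "t < m" for t
  proof (cases "js t k0 = 0")
    case True
    then show ?thesis using G0[OF True tm] by simp
  next
    case False
    then have pos: "0 < js t k0" by simp
    have sums: "\<forall>k. (\<Sum>t'<m. js' t t' k) = ltyp len S k"
    proof
      fix k
      have tm': "t \<in> {..<m}" using tm by simp
      have a: "(\<Sum>t'<m. js t' k) = js t k + (\<Sum>t'\<in>{..<m} - {t}. js t' k)"
        by (rule sum.remove[OF finite_lessThan tm'])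
      have b: "(\<Sum>t'<m. js' t t' k) = js' t t k + (\<Sum>t'\<in>{..<m} - {t}. js' t t' k)"
        by (rule sum.remove[OF finite_lessThan tm'])
      have c: "(\<Sum>t'\<in>{..<m} - {t}. js' t t' k) = (\<Sum>t'\<in>{..<m} - {t}. js t' k)"
        unfolding js'_def by (intro sum.cong) auto
      have d: "js' t t k + (if k = k0 then 1 else 0) = js t k" unfolding js'_def using pos by auto
      have e: "(\<Sum>t<m. js t k) = ltyp len S k + (if k0 = k then 1 else 0)"
        using insert.prems(1) ins k0_def by simp
      show "(\<Sum>t'<m. js' t t' k) = ltyp len S k" using a b c d e by (auto split: if_splits)
    qed
    have IH: "card (Fs len S m (js' t)) * Qf K m (js' t) = qf K (ltyp len S)"
      using insert.IH[OF sums insert.prems(2) SK] .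
    have Q: "Qf K m js = js t k0 * Qf K m (js' t)"
      unfolding js'_def by (rule Qf_dec[where js=js, OF insert.prems(2) k0K tm pos])
    show ?thesis unfolding Gpos[OF pos tm] Q using IH by (simp add: algebra_simps)
  qed
  have "card (Fs len (insert x S) m js) * Qf K m js = (\<Sum>t<m. card (G t) * Qf K m js)"
    unfolding cardU by (simp add: sum_distrib_right)
  also have "\<dots> = (\<Sum>t<m. js t k0) * qf K (ltyp len S)"
    using each by (simp add: sum_distrib_right)
  also have "(\<Sum>t<m. js t k0) = Suc (ltyp len S k0)"
    using insert.prems(1) ins[where len=len and k=k0] k0_def by simp
  also have "Suc (ltyp len S k0) * qf K (ltyp len S) = qf K ((ltyp len S)(k0 := Suc (ltyp len S k0)))"
    by (rule qf_inc[OF insert.prems(2) k0K, symmetric])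
  also have "(ltyp len S)(k0 := Suc (ltyp len S k0)) = ltyp len (insert x S)"
    using ins k0_def by (auto simp: fun_eq_iff)
  finally show ?case .
qed



definition fibr :: "nat \<Rightarrow> (nat \<Rightarrow> nat) \<Rightarrow> nat \<Rightarrow> nat set" where
  "fibr r f t = {j \<in> {..<r}. f j = t}"

definition Surj :: "nat \<Rightarrow> nat \<Rightarrow> (nat \<Rightarrow> nat) set" where
  "Surj r m = {f \<in> {..<r} \<rightarrow>\<^sub>E {..<m}. \<forall>t<m. fibr r f t \<noteq> {}}"

lemma finite_Surj: "finite (Surj r m)"
proof -
  have "Surj r m \<subseteq> {..<r} \<rightarrow>\<^sub>E {..<m}" unfolding Surj_def by blast
  then show ?thesis using finite_PiE[of "{..<r}" "\<lambda>_. {..<m}"] finite_subset by auto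
qed

lemma Surj_inj:
  assumes "f \<in> Surj r m"
  shows "inj_on (fibr r f) {..<m}"
proof (rule inj_onI)
  fix t t' assume tt: "t \<in> {..<m}" "t' \<in> {..<m}" "fibr r f t = fibr r f t'"
  obtain j where "j \<in> fibr r f t" using assms tt(1) unfolding Surj_def by auto
  then show "t = t'" using tt(3) by (auto simp: fibr_def)
qed

lemma Surj_partition:
  assumes "f \<in> Surj r m"
  shows "partition_on {..<r} (fibr r f ` {..<m})" "card (fibr r f ` {..<m}) = m"
proof -
  have f: "f \<in> {..<r} \<rightarrow>\<^sub>E {..<m}" "\<forall>t<m. fibr r f t \<noteq> {}" using assms unfolding Surj_def by auto
  have "\<Union>(fibr r f ` {..<m}) = {..<r}" using f(1) by (auto simp: fibr_def PiE_iff)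
  moreover have "disjoint (fibr r f ` {..<m})"
    unfolding disjoint_def by (auto simp: fibr_def)
  moreover have "{} \<notin> fibr r f ` {..<m}" using f(2) by auto
  ultimately show "partition_on {..<r} (fibr r f ` {..<m})" unfolding partition_on_def by blast
  show "card (fibr r f ` {..<m}) = m" using card_image[OF Surj_inj[OF assms]] by simp
qed

lemma fiber_card:
  assumes P: "partition_on {..<r} P" and cP: "card P = m"
  shows "card {f \<in> Surj r m. fibr r f ` {..<m} = P} = fact m"
proof -
  have finP: "finite P" using P finite_elements by blast
  let ?h = "\<lambda>f. map (fibr r f) [0..<m]"
  have bij: "bij_betw ?h {f \<in> Surj r m. fibr r f ` {..<m} = P} (permutations_of_set P)"
  proof (rule bij_betw_imageI)
    show "inj_on ?h {f \<in> Surj r m. fibr r f ` {..<m} = P}"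
    proof (rule inj_onI)
      fix f g assume f: "f \<in> {f \<in> Surj r m. fibr r f ` {..<m} = P}" and g: "g \<in> {f \<in> Surj r m. fibr r f ` {..<m} = P}"
        and e: "?h f = ?h g"
      have fP: "f \<in> {..<r} \<rightarrow>\<^sub>E {..<m}" and gP: "g \<in> {..<r} \<rightarrow>\<^sub>E {..<m}" using f g unfolding Surj_def by auto
      show "f = g"
      proof
        fix j
        show "f j = g j"
        proof (cases "j < r")
          case True
          then have fj: "f j < m" using fP by (auto simp: PiE_iff)
          have "fibr r f (f j) = fibr r g (f j)"
            using arg_cong[OF e, of "\<lambda>xs. xs ! f j"] fj by simp
          moreover have "j \<in> fibr r f (f j)" using True by (simp add: fibr_def)
          ultimately show ?thesis by (simp add: fibr_def)
        next
          case False
          then show ?thesis using fP gP by (auto simp: PiE_iff extensional_def)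
        qed
      qed
    qed
  next
    show "?h ` {f \<in> Surj r m. fibr r f ` {..<m} = P} = permutations_of_set P"
    proof
      show "?h ` {f \<in> Surj r m. fibr r f ` {..<m} = P} \<subseteq> permutations_of_set P"
      proof
        fix xs assume "xs \<in> ?h ` {f \<in> Surj r m. fibr r f ` {..<m} = P}"
        then obtain f where f: "f \<in> Surj r m" "fibr r f ` {..<m} = P" and xs: "xs = ?h f" by blast
        have "set xs = P" using f(2) xs by (simp add: atLeast_upt)
        moreover have "distinct xs" using xs Surj_inj[OF f(1)] by (simp add: distinct_map atLeast_upt)
        ultimately show "xs \<in> permutations_of_set P" by (simp add: permutations_of_set_def)
      qed
    next
      show "permutations_of_set P \<subseteq> ?h ` {f \<in> Surj r m. fibr r f ` {..<m} = P}"
      proof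
        fix xs assume "xs \<in> permutations_of_set P"
        then have xs: "set xs = P" "distinct xs" by (auto simp: permutations_of_set_def)
        have lxs: "length xs = m" using distinct_card[OF xs(2)] xs(1) cP by simp
        have UP: "\<Union>P = {..<r}" and dP: "disjoint P" and neP: "{} \<notin> P"
          using P unfolding partition_on_def by auto
        have uniq: "t = t'" if "t < m" "t' < m" "j \<in> xs ! t" "j \<in> xs ! t'" for t t' j
        proof (rule ccontr)
          assume "t \<noteq> t'"
          then have "xs ! t \<noteq> xs ! t'" using xs(2) that(1,2) lxs by (simp add: nth_eq_iff_index_eq)
          moreover have "xs ! t \<in> P" "xs ! t' \<in> P" using that(1,2) lxs xs(1) by auto
          ultimately have "xs ! t \<inter> xs ! t' = {}" using dP unfolding disjoint_def by blast
          then show False using that(3,4) by blast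
        qed
        have ex: "\<exists>t<m. j \<in> xs ! t" if "j < r" for j
        proof -
          have "j \<in> \<Union>P" using UP that by simp
          then obtain B where "B \<in> set xs" "j \<in> B" using xs(1) by auto
          then obtain t where "t < length xs" "xs ! t = B" by (auto simp: in_set_conv_nth)
          then show ?thesis using \<open>j \<in> B\<close> lxs by auto
        qed
        define f where "f j = (if j < r then (THE t. t < m \<and> j \<in> xs ! t) else undefined)" for j
        have fj: "f j < m \<and> j \<in> xs ! f j" if jr: "j < r" for j
        proof -
          obtain t where t: "t < m" "j \<in> xs ! t" using ex[OF jr] by blast
          have "(THE t. t < m \<and> j \<in> xs ! t) = t"
            by (rule the_equality) (use t uniq in auto)
          then show ?thesis using t jr by (simp add: f_def)
        qed
        have fib: "fibr r f t = xs ! t" if "t < m" for t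
        proof
          show "fibr r f t \<subseteq> xs ! t" using fj by (auto simp: fibr_def)
          show "xs ! t \<subseteq> fibr r f t"
          proof
            fix j assume j: "j \<in> xs ! t"
            have "xs ! t \<in> P" using that lxs xs(1) by auto
            then have "j < r" using j UP by auto
            then show "j \<in> fibr r f t" using fj[OF \<open>j < r\<close>] uniq[OF _ that _ j] by (auto simp: fibr_def)
          qed
        qed
        have hx: "?h f = xs" by (rule nth_equalityI) (use lxs fib in auto)
        have fS: "f \<in> Surj r m"
        proof -
          have "f \<in> {..<r} \<rightarrow>\<^sub>E {..<m}" using fj by (auto simp: PiE_iff extensional_def f_def)
          moreover have "fibr r f t \<noteq> {}" if "t < m" for t
          proof -
            have "xs ! t \<in> P" using that lxs xs(1) by auto
            then show ?thesis using fib[OF that] neP by auto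
          qed
          ultimately show ?thesis unfolding Surj_def by blast
        qed
        have "fibr r f ` {..<m} = P"
        proof -
          have "fibr r f ` {..<m} = set (?h f)" by (simp add: atLeast_upt)
          then show ?thesis using hx xs(1) by simp
        qed
        then show "xs \<in> ?h ` {f \<in> Surj r m. fibr r f ` {..<m} = P}" using fS hx by force
      qed
    qed
  qed
  have "card {f \<in> Surj r m. fibr r f ` {..<m} = P} = card (permutations_of_set P)"
    using bij_betw_same_card[OF bij] .
  then show ?thesis using finP cP by simp
qed

lemma sum_parts_surj:
  fixes g :: "nat set \<Rightarrow> real"
  shows "(\<Sum>P | partition_on {..<r} P \<and> card P = m. \<Prod>B\<in>P. g B) * fact m =
         (\<Sum>f\<in>Surj r m. \<Prod>t<m. g (fibr r f t))"
proof -
  let ?T = "{P. partition_on {..<r} P \<and> card P = m}"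
  let ?\<Phi> = "\<lambda>f. fibr r f ` {..<m}"
  have finT: "finite ?T" using finitely_many_partition_on[of "{..<r}"] by (auto intro: finite_subset)
  have sub: "?\<Phi> ` Surj r m \<subseteq> ?T" using Surj_partition by blast
  have "(\<Sum>f\<in>Surj r m. \<Prod>t<m. g (fibr r f t)) = (\<Sum>f\<in>Surj r m. \<Prod>B\<in>?\<Phi> f. g B)"
    by (intro sum.cong refl) (simp add: prod.reindex[OF Surj_inj])
  also have "\<dots> = (\<Sum>P\<in>?T. \<Sum>f\<in>{f \<in> Surj r m. ?\<Phi> f = P}. \<Prod>B\<in>?\<Phi> f. g B)"
    by (rule sum.group[symmetric, OF finite_Surj finT sub])
  also have "\<dots> = (\<Sum>P\<in>?T. \<Sum>f\<in>{f \<in> Surj r m. ?\<Phi> f = P}. \<Prod>B\<in>P. g B)"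
    by (intro sum.cong refl) auto
  also have "\<dots> = (\<Sum>P\<in>?T. fact m * (\<Prod>B\<in>P. g B))"
    by (intro sum.cong refl) (simp add: fiber_card)
  finally have e: "(\<Sum>f\<in>Surj r m. \<Prod>t<m. g (fibr r f t)) = (\<Sum>P\<in>?T. fact m * (\<Prod>B\<in>P. g B))" .
  have "(\<Sum>P\<in>?T. fact m * (\<Prod>B\<in>P. g B)) = (\<Sum>P\<in>?T. \<Prod>B\<in>P. g B) * fact m"
    by (simp only: sum_distrib_left[symmetric] mult.commute)
  then show ?thesis using e by simp
qed



lemma ltyp_supp: "finite B \<Longrightarrow> {k. ltyp len B k \<noteq> 0} = len ` B"
proof -
  assume fin: "finite B"
  show ?thesis
  proof
    show "{k. ltyp len B k \<noteq> 0} \<subseteq> len ` B"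
    proof
      fix k assume "k \<in> {k. ltyp len B k \<noteq> 0}"
      then have "card {j \<in> B. len j = k} \<noteq> 0" by (simp add: ltyp_def)
      then have "{j \<in> B. len j = k} \<noteq> {}" by (intro notI) simp
      then show "k \<in> len ` B" by auto
    qed
    show "len ` B \<subseteq> {k. ltyp len B k \<noteq> 0}"
    proof
      fix k assume "k \<in> len ` B"
      then obtain j where "j \<in> B" "len j = k" by auto
      then have "{j \<in> B. len j = k} \<noteq> {}" by auto
      then show "k \<in> {k. ltyp len B k \<noteq> 0}" using fin by (simp add: ltyp_def)
    qed
  qed
qed

lemma morder_ltyp: "morder (ltyp len {..<r}) = r"
proof -
  have "real (morder (ltyp len {..<r})) = (\<Sum>k | ltyp len {..<r} k \<noteq> 0. real (ltyp len {..<r} k) * 1)"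
    by (simp add: morder_def)
  also have "\<dots> = (\<Sum>j\<in>{..<r}. (\<lambda>_. 1::real) (len j))"
    by (rule sum_by_len[symmetric]) simp
  also have "\<dots> = real r" by simp
  finally show ?thesis by linarith
qed

lemma mfact_qf:
  assumes "finite K" "{k. j k \<noteq> 0} \<subseteq> K"
  shows "mfact j = real (qf K j)"
proof -
  have "mfact j = (\<Prod>k\<in>K. fact (j k))"
    unfolding mfact_def by (rule prod.mono_neutral_left) (use assms in auto)
  then show ?thesis by (simp add: qf_def)
qed

lemma finite_le_fun:
  fixes i :: "nat \<Rightarrow> nat"
  assumes "finite {k. i k \<noteq> 0}"
  shows "finite {j. j \<le> i}"
proof -
  let ?D = "{k. i k \<noteq> 0}"
  have inj: "inj_on (\<lambda>j. restrict j ?D) {j. j \<le> i}"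
  proof (rule inj_onI)
    fix j j' assume a: "j \<in> {j. j \<le> i}" "j' \<in> {j. j \<le> i}" "restrict j ?D = restrict j' ?D"
    show "j = j'"
    proof
      fix k
      show "j k = j' k"
      proof (cases "k \<in> ?D")
        case True
        have "restrict j ?D k = restrict j' ?D k" using a(3) by simp
        then show ?thesis using True by simp
      next
        case False
        then have "i k = 0" by simp
        moreover have "j k \<le> i k" "j' k \<le> i k" using a(1,2) by (auto simp: le_fun_def)
        ultimately show ?thesis by simp
      qed
    qed
  qed
  have "(\<lambda>j. restrict j ?D) ` {j. j \<le> i} \<subseteq> PiE ?D (\<lambda>k. {..i k})"
  proof
    fix x assume "x \<in> (\<lambda>j. restrict j ?D) ` {j. j \<le> i}"
    then obtain j where j: "j \<le> i" "x = restrict j ?D" by blast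
    have "\<forall>k\<in>?D. j k \<in> {..i k}" using j(1) by (simp add: le_fun_def)
    then show "x \<in> PiE ?D (\<lambda>k. {..i k})" unfolding j(2) by (rule restrict_PiE_iff[THEN iffD2])
  qed
  moreover have "finite (PiE ?D (\<lambda>k. {..i k}))" using assms by (intro finite_PiE) auto
  ultimately have "finite ((\<lambda>j. restrict j ?D) ` {j. j \<le> i})" using finite_subset by blast
  then show ?thesis using finite_imageD[OF _ inj] by blast
qed

lemma mfact_nz: "mfact j \<noteq> 0"
  unfolding mfact_def by (cases "finite {k. j k \<noteq> 0}") (simp_all add: prod_zero_iff)

definition Comp :: "(nat \<Rightarrow> nat) \<Rightarrow> nat \<Rightarrow> (nat \<Rightarrow> nat \<Rightarrow> nat) set" where
  "Comp i m = {js \<in> {..<m} \<rightarrow>\<^sub>E {j. j \<le> i}. (\<forall>t<m. js t \<noteq> (\<lambda>_. 0)) \<and> (\<forall>k. (\<Sum>t<m. js t k) = i k)}"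

lemma sum_surj_comp:
  fixes a :: "(nat \<Rightarrow> nat) \<Rightarrow> real"
  assumes len1: "\<forall>j<r. 1 \<le> len j"
  shows "(\<Sum>f\<in>Surj r m. \<Prod>t<m. a (ltyp len (fibr r f t))) =
     mfact (ltyp len {..<r}) * (\<Sum>js\<in>Comp (ltyp len {..<r}) m. \<Prod>t<m. a (js t) / mfact (js t))"
proof -
  let ?i = "ltyp len {..<r}"
  let ?K = "len ` {..<r}"
  let ?\<Psi> = "\<lambda>f. restrict (\<lambda>t. ltyp len (fibr r f t)) {..<m}"
  have suppi: "{k. ?i k \<noteq> 0} = ?K" by (rule ltyp_supp) simp
  have finK: "finite ?K" by simp
  have finC: "finite (Comp ?i m)"
  proof -
    have "finite {j. j \<le> ?i}" using suppi by (intro finite_le_fun) simp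
    then have "finite ({..<m} \<rightarrow>\<^sub>E {j. j \<le> ?i})" by (intro finite_PiE) auto
    then show ?thesis unfolding Comp_def by (rule finite_subset[rotated]) blast
  qed
  have ltyp_mono: "ltyp len A \<le> ltyp len B" if "A \<subseteq> B" "finite B" for A B
    unfolding ltyp_def le_fun_def using that by (auto intro: card_mono)
  have sumfib: "(\<Sum>t<m. ltyp len (fibr r f t) k) = ?i k" if f: "f \<in> Surj r m" for f k
  proof -
    have fP: "f \<in> {..<r} \<rightarrow>\<^sub>E {..<m}" using f unfolding Surj_def by blast
    have "{j \<in> {..<r}. len j = k} = (\<Union>t\<in>{..<m}. {j \<in> fibr r f t. len j = k})"
      using fP by (auto simp: fibr_def PiE_iff)
    then have "?i k = card (\<Union>t\<in>{..<m}. {j \<in> fibr r f t. len j = k})" by (simp add: ltyp_def)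
    also have "\<dots> = (\<Sum>t<m. card {j \<in> fibr r f t. len j = k})"
      by (rule card_UN_disjoint) (auto simp: fibr_def)
    finally show ?thesis by (simp add: ltyp_def)
  qed
  have sub: "?\<Psi> ` Surj r m \<subseteq> Comp ?i m"
  proof
    fix js assume "js \<in> ?\<Psi> ` Surj r m"
    then obtain f where f: "f \<in> Surj r m" and js: "js = ?\<Psi> f" by blast
    have "js \<in> {..<m} \<rightarrow>\<^sub>E {j. j \<le> ?i}"
      using js ltyp_mono[of "fibr r _ _" "{..<r}"] by (auto simp: fibr_def)
    moreover have "js t \<noteq> (\<lambda>_. 0)" if t: "t < m" for t
    proof
      assume z: "js t = (\<lambda>_. 0)"
      obtain j0 where j0: "j0 \<in> fibr r f t" using f t unfolding Surj_def by blast
      have "fibr r f t \<noteq> {}" using j0 by blast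
      have "j0 \<in> {j \<in> fibr r f t. len j = len j0}" using j0 by simp
      moreover have "finite {j \<in> fibr r f t. len j = len j0}" by (simp add: fibr_def)
      ultimately have "card {j \<in> fibr r f t. len j = len j0} \<noteq> 0"
        by (auto simp: card_eq_0_iff)
      moreover have "js t (len j0) = card {j \<in> fibr r f t. len j = len j0}" using js t by (simp add: ltyp_def)
      ultimately show False using z by simp
    qed
    moreover have "(\<Sum>t<m. js t k) = ?i k" for k
      using sumfib[OF f, of k] js by simp
    ultimately show "js \<in> Comp ?i m" unfolding Comp_def by blast
  qed
  have fibset: "{f \<in> Surj r m. ?\<Psi> f = js} = Fs len {..<r} m js" if js: "js \<in> Comp ?i m" for js
  proof
    show "{f \<in> Surj r m. ?\<Psi> f = js} \<subseteq> Fs len {..<r} m js"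
    proof
      fix f assume "f \<in> {f \<in> Surj r m. ?\<Psi> f = js}"
      then have f: "f \<in> Surj r m" "?\<Psi> f = js" by auto
      have "ltyp len {j \<in> {..<r}. f j = t} = js t" if tm: "t < m" for t
      proof -
        have "?\<Psi> f t = js t" using f(2) by simp
        then show ?thesis using tm by (simp add: fibr_def)
      qed
      then show "f \<in> Fs len {..<r} m js" using f(1) unfolding Fs_def Surj_def by blast
    qed
    show "Fs len {..<r} m js \<subseteq> {f \<in> Surj r m. ?\<Psi> f = js}"
    proof
      fix f assume "f \<in> Fs len {..<r} m js"
      then have f: "f \<in> {..<r} \<rightarrow>\<^sub>E {..<m}" "\<forall>t<m. ltyp len {j \<in> {..<r}. f j = t} = js t"
        unfolding Fs_def by auto
      have jsP: "js \<in> {..<m} \<rightarrow>\<^sub>E {j. j \<le> ?i}" "\<forall>t<m. js t \<noteq> (\<lambda>_. 0)" using js unfolding Comp_def by auto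
      have ne: "fibr r f t \<noteq> {}" if "t < m" for t
      proof
        assume e: "fibr r f t = {}"
        have "js t = ltyp len (fibr r f t)" using f(2) that by (simp add: fibr_def)
        then have "js t = (\<lambda>_. 0)" using e by (simp add: ltyp_empty)
        then show False using jsP(2) that by simp
      qed
      have "f \<in> Surj r m" unfolding Surj_def using f(1) ne by blast
      moreover have "?\<Psi> f = js"
      proof
        fix t show "?\<Psi> f t = js t"
          using f(2) jsP(1) by (cases "t < m") (auto simp: fibr_def PiE_iff extensional_def)
      qed
      ultimately show "f \<in> {f \<in> Surj r m. ?\<Psi> f = js}" by blast
    qed
  qed
  have mf_js: "mfact (js t) = real (qf ?K (js t))" if js: "js \<in> Comp ?i m" and t: "t < m" for js t
  proof -
    have "js t \<le> ?i" using js t unfolding Comp_def by (auto simp: PiE_iff)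
    have "{k. js t k \<noteq> 0} \<subseteq> ?K"
    proof
      fix k assume k: "k \<in> {k. js t k \<noteq> 0}"
      have "js t k \<le> ?i k" using \<open>js t \<le> ?i\<close> by (simp add: le_fun_def)
      then have "?i k \<noteq> 0" using k by simp
      then show "k \<in> ?K" using suppi by blast
    qed
    then show ?thesis by (rule mfact_qf[OF finK])
  qed
  have mf_i: "mfact ?i = real (qf ?K ?i)" using suppi by (intro mfact_qf[OF finK]) simp
  have cnt: "real (card (Fs len {..<r} m js)) = mfact ?i / (\<Prod>t<m. mfact (js t))" if js: "js \<in> Comp ?i m" for js
  proof -
    have sums: "\<forall>k. (\<Sum>t<m. js t k) = ltyp len {..<r} k" using js unfolding Comp_def by blast
    have c: "card (Fs len {..<r} m js) * Qf ?K m js = qf ?K ?i"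
      by (rule count_types[OF finite_lessThan finK _ sums]) simp
    have Q: "real (Qf ?K m js) = (\<Prod>t<m. mfact (js t))"
      unfolding Qf_def using mf_js[OF js] by simp
    have nz: "(\<Prod>t<m. mfact (js t)) \<noteq> 0" by (simp add: prod_zero_iff mfact_nz)
    have "real (card (Fs len {..<r} m js)) * real (Qf ?K m js) = real (qf ?K ?i)"
      using c by (simp only: of_nat_mult[symmetric])
    then have "real (card (Fs len {..<r} m js)) * (\<Prod>t<m. mfact (js t)) = mfact ?i"
      using Q mf_i by simp
    then show ?thesis using nz by (simp add: eq_divide_eq)
  qed
  have inner: "(\<Sum>f\<in>{f \<in> Surj r m. ?\<Psi> f = js}. \<Prod>t<m. a (?\<Psi> f t)) =
      real (card {f \<in> Surj r m. ?\<Psi> f = js}) * (\<Prod>t<m. a (js t))" for js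
  proof -
    have "(\<Sum>f\<in>{f \<in> Surj r m. ?\<Psi> f = js}. \<Prod>t<m. a (?\<Psi> f t)) =
        (\<Sum>f\<in>{f \<in> Surj r m. ?\<Psi> f = js}. \<Prod>t<m. a (js t))"
      by (rule sum.cong) auto
    then show ?thesis by simp
  qed
  have "(\<Sum>f\<in>Surj r m. \<Prod>t<m. a (ltyp len (fibr r f t))) = (\<Sum>f\<in>Surj r m. \<Prod>t<m. a (?\<Psi> f t))"
    by (intro sum.cong refl prod.cong) auto
  also have "\<dots> = (\<Sum>js\<in>Comp ?i m. \<Sum>f\<in>{f \<in> Surj r m. ?\<Psi> f = js}. \<Prod>t<m. a (?\<Psi> f t))"
    by (rule sum.group[symmetric, OF finite_Surj finC sub])
  also have "\<dots> = (\<Sum>js\<in>Comp ?i m. real (card (Fs len {..<r} m js)) * (\<Prod>t<m. a (js t)))"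
    by (intro sum.cong refl) (simp only: inner, simp only: fibset)
  also have "\<dots> = (\<Sum>js\<in>Comp ?i m. mfact ?i * (\<Prod>t<m. a (js t) / mfact (js t)))"
    by (intro sum.cong refl) (simp add: cnt prod_dividef)
  also have "\<dots> = mfact ?i * (\<Sum>js\<in>Comp ?i m. \<Prod>t<m. a (js t) / mfact (js t))"
    by (simp add: sum_distrib_left)
  finally show ?thesis .
qed



lemma card_partition_range:
  assumes r1: "1 \<le> r" and P: "partition_on {..<r} P"
  shows "card P \<in> {1..r}"
proof -
  have finP: "finite P" using P finite_elements by blast
  have UP: "\<Union>P = {..<r}" and neP: "{} \<notin> P" using P unfolding partition_on_def by auto
  have "0 \<in> {..<r}" using r1 by simp
  then have "P \<noteq> {}" using UP by auto
  then have c1: "1 \<le> card P" using finP by (simp add: Suc_le_eq card_gt_0_iff)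
  have finp: "\<And>p. p \<in> P \<Longrightarrow> finite p" using UP by (metis Union_upper finite_lessThan finite_subset)
  have "r = (\<Sum>p\<in>P. card p)" using product_partition[OF P finp] by simp
  also have "\<dots> \<ge> (\<Sum>p\<in>P. 1)"
  proof (rule sum_mono)
    fix p assume p: "p \<in> P"
    then have "p \<noteq> {}" using neP by auto
    then show "1 \<le> card p" using finp[OF p] by (simp add: Suc_le_eq card_gt_0_iff)
  qed
  finally have "card P \<le> r" by simp
  then show ?thesis using c1 by simp
qed

lemma F2:
  fixes a :: "(nat \<Rightarrow> nat) \<Rightarrow> real"
  assumes r1: "1 \<le> r" and len1: "\<forall>j<r. 1 \<le> len j"
  shows "mfact (ltyp len {..<r}) * (\<Sum>m\<in>{1..morder (ltyp len {..<r})}. (-1) ^ (m - 1) / real m *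
      (\<Sum>js \<in> {js \<in> {..<m} \<rightarrow>\<^sub>E {j. j \<le> ltyp len {..<r}}.
             (\<forall>t<m. js t \<noteq> (\<lambda>_. 0)) \<and> (\<forall>k. (\<Sum>t<m. js t k) = ltyp len {..<r} k)}.
         \<Prod>t<m. a (js t) / mfact (js t)))
    = (\<Sum>P | partition_on {..<r} P. (-1) ^ (card P - 1) * fact (card P - 1) * (\<Prod>B\<in>P. a (ltyp len B)))"
proof -
  let ?i = "ltyp len {..<r}"
  let ?T = "{P. partition_on {..<r} P}"
  let ?S = "\<lambda>m. (\<Sum>P | partition_on {..<r} P \<and> card P = m. \<Prod>B\<in>P. a (ltyp len B))"
  have finT: "finite ?T" using finitely_many_partition_on[of "{..<r}"] by simp
  have "mfact ?i * (\<Sum>m\<in>{1..morder ?i}. (-1) ^ (m - 1) / real m *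
      (\<Sum>js \<in> {js \<in> {..<m} \<rightarrow>\<^sub>E {j. j \<le> ?i}.
             (\<forall>t<m. js t \<noteq> (\<lambda>_. 0)) \<and> (\<forall>k. (\<Sum>t<m. js t k) = ?i k)}.
         \<Prod>t<m. a (js t) / mfact (js t)))
      = (\<Sum>m\<in>{1..r}. (-1) ^ (m - 1) / real m *
         (mfact ?i * (\<Sum>js\<in>Comp ?i m. \<Prod>t<m. a (js t) / mfact (js t))))"
    unfolding morder_ltyp Comp_def[symmetric] by (simp add: sum_distrib_left algebra_simps)
  also have "\<dots> = (\<Sum>m\<in>{1..r}. (-1) ^ (m - 1) / real m * (\<Sum>f\<in>Surj r m. \<Prod>t<m. a (ltyp len (fibr r f t))))"
    by (intro sum.cong refl) (simp add: sum_surj_comp[OF len1])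
  also have "\<dots> = (\<Sum>m\<in>{1..r}. (-1) ^ (m - 1) / real m * (?S m * fact m))"
    by (intro sum.cong refl) (simp add: sum_parts_surj[where g="\<lambda>B. a (ltyp len B)"])
  also have "\<dots> = (\<Sum>m\<in>{1..r}. (-1) ^ (m - 1) * fact (m - 1) * ?S m)"
  proof (intro sum.cong refl)
    fix m assume "m \<in> {1..r}"
    then have "0 < m" by simp
    then have "fact m = real m * fact (m - 1)" by (simp add: fact_reduce)
    then show "(-1) ^ (m - 1) / real m * (?S m * fact m) = (-1) ^ (m - 1) * fact (m - 1) * ?S m"
      using \<open>0 < m\<close> by simp
  qed
  also have "\<dots> = (\<Sum>m\<in>{1..r}. \<Sum>P | partition_on {..<r} P \<and> card P = m.
       (-1) ^ (card P - 1) * fact (card P - 1) * (\<Prod>B\<in>P. a (ltyp len B)))"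
    by (intro sum.cong refl) (simp add: sum_distrib_left)
  also have "\<dots> = (\<Sum>m\<in>{1..r}. \<Sum>P\<in>{P \<in> ?T. card P = m}.
       (-1) ^ (card P - 1) * fact (card P - 1) * (\<Prod>B\<in>P. a (ltyp len B)))"
    by simp
  also have "\<dots> = (\<Sum>P\<in>?T. (-1) ^ (card P - 1) * fact (card P - 1) * (\<Prod>B\<in>P. a (ltyp len B)))"
    by (rule sum.group[OF finT finite_atLeastAtMost]) (use card_partition_range[OF r1] in blast)
  finally show ?thesis by simp
qed



lemma central:
  assumes cs: "cyc_sys r len \<sigma>s" and r1: "1 \<le> r" and n: "1 \<le> n"
  shows "lnA_deriv \<rho> n (ltyp len {..<r}) = real n powr ((\<Sum>j<r. real (len j) - 1) / 2) * kappa \<rho> n r \<sigma>s"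
proof -
  have len1: "\<forall>j<r. 1 \<le> len j" using cs unfolding cyc_sys_def by blast
  let ?T = "{P. partition_on {..<r} P}"
  let ?s = "\<lambda>B. (\<Sum>j\<in>B. real (len j) - 1) / 2"
  have "lnA_deriv \<rho> n (ltyp len {..<r}) =
     (\<Sum>P\<in>?T. (-1) ^ (card P - 1) * fact (card P - 1) * (\<Prod>B\<in>P. Aderiv \<rho> n (ltyp len B)))"
    unfolding lnA_deriv_def lnA_coeff_def by (rule F2[OF r1 len1])
  also have "\<dots> = (\<Sum>P\<in>?T. (-1) ^ (card P - 1) * fact (card P - 1) *
       (\<Prod>B\<in>P. Mrho \<rho> n (perm_prod \<sigma>s B)) * real n powr ?s {..<r})"
  proof (intro sum.cong refl)
    fix P assume "P \<in> ?T"
    then have P: "partition_on {..<r} P" by simp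
    have sub: "B \<subseteq> {..<r}" if "B \<in> P" for B using P that unfolding partition_on_def by blast
    have "(\<Prod>B\<in>P. Aderiv \<rho> n (ltyp len B)) = (\<Prod>B\<in>P. Mrho \<rho> n (perm_prod \<sigma>s B) * real n powr ?s B)"
      by (intro prod.cong refl) (simp add: F1[OF cs sub n])
    also have "\<dots> = (\<Prod>B\<in>P. Mrho \<rho> n (perm_prod \<sigma>s B)) * (\<Prod>B\<in>P. real n powr ?s B)"
      by (rule prod.distrib)
    also have "(\<Prod>B\<in>P. real n powr ?s B) = real n powr (\<Sum>B\<in>P. ?s B)"
      using n by (simp add: powr_sum)
    also have "(\<Sum>B\<in>P. ?s B) = ?s {..<r}"
      using sum.partition[OF finite_lessThan P, of "\<lambda>j. real (len j) - 1"] by (simp add: sum_divide_distrib)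
    finally show "(-1) ^ (card P - 1) * fact (card P - 1) * (\<Prod>B\<in>P. Aderiv \<rho> n (ltyp len B)) =
       (-1) ^ (card P - 1) * fact (card P - 1) * (\<Prod>B\<in>P. Mrho \<rho> n (perm_prod \<sigma>s B)) * real n powr ?s {..<r}"
      by simp
  qed
  also have "\<dots> = real n powr ?s {..<r} * kappa \<rho> n r \<sigma>s"
    unfolding kappa_def by (simp add: sum_distrib_left sum_distrib_right algebra_simps)
  finally show ?thesis .
qed

lemma partitions_one: "{P. partition_on {..<Suc 0} P} = {{{0}}}"
proof -
  have iff: "partition_on {0} P \<longleftrightarrow> P = {{0}}" for P :: "nat set set"
  proof
    assume P: "partition_on {0} P"
    have UP: "\<Union>P = {0}" and neP: "{} \<notin> P" using P unfolding partition_on_def by auto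
    have "B = {0}" if B: "B \<in> P" for B
    proof -
      have "B \<subseteq> {0}" using UP B by blast
      moreover have "B \<noteq> {}" using neP B by blast
      ultimately show ?thesis using subset_singletonD by blast
    qed
    then have "P \<subseteq> {{0}}" by blast
    moreover have "P \<noteq> {}" using UP by auto
    ultimately show "P = {{0}}" using subset_singletonD by blast
  next
    assume "P = {{0}}"
    then show "partition_on {0} P" by (simp add: partition_on_space)
  qed
  have e: "{..<Suc 0} = {0::nat}" by auto
  show ?thesis unfolding e using iff by blast
qed

lemma kappa_one: "kappa \<rho> n (Suc 0) \<sigma>s = Mrho \<rho> n (\<sigma>s 0)"
proof -
  have "perm_prod \<sigma>s {0} = \<sigma>s 0" by (simp add: perm_prod_def)
  then show ?thesis unfolding kappa_def using partitions_one by simp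
qed

lemma ltyp_one: "ltyp (\<lambda>_. k) {..<Suc 0} = unit_index k"
  by (auto simp: ltyp_def unit_index_def fun_eq_iff)

lemma single_cycle:
  assumes c: "is_cycle k \<sigma>" and k: "1 \<le> k" and n: "1 \<le> n"
  shows "lnA_deriv \<rho> n (unit_index k) = real n powr ((real k - 1) / 2) * Mrho \<rho> n \<sigma>"
proof -
  have cs: "cyc_sys 1 (\<lambda>_. k) (\<lambda>_. \<sigma>)" using c k by (simp add: cyc_sys_def)
  show ?thesis using central[OF cs _ n, of \<rho>] by (simp add: ltyp_one kappa_one)
qed

lemma mindex_ltyp:
  assumes "\<forall>j<r. 1 \<le> len j"
  shows "mindex (ltyp len {..<r})"
proof -
  have "ltyp len {..<r} 0 = 0" using assms by (auto simp: ltyp_def)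
  moreover have "finite {k. ltyp len {..<r} k \<noteq> 0}" using ltyp_supp[of "{..<r}" len] by simp
  ultimately show ?thesis by (simp add: mindex_def)
qed

lemma morder_alt:
  assumes "finite D" "{k. i k \<noteq> 0} \<subseteq> D"
  shows "morder i = (\<Sum>k\<in>D. i k)"
  unfolding morder_def by (rule sum.mono_neutral_left) (use assms in auto)

lemma exists_len:
  "mindex i \<Longrightarrow> \<exists>len. (\<forall>j<morder i. 1 \<le> len j) \<and> ltyp len {..<morder i} = i"
proof (induction "morder i" arbitrary: i)
  case 0
  have fin: "finite {k. i k \<noteq> 0}" using 0(2) by (simp add: mindex_def)
  have m0: "morder i = 0" using 0(1) by simp
  have z: "i k = 0" for k
  proof (rule ccontr)
    assume ik: "i k \<noteq> 0"
    then have "k \<in> {k. i k \<noteq> 0}" by simp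
    then have "i k \<le> morder i" unfolding morder_def by (rule member_le_sum) (use fin in auto)
    then show False using ik m0 by simp
  qed
  have e: "{..<morder i} = {}" using m0 by simp
  have "ltyp (\<lambda>_. 1) {..<morder i} = i" unfolding e ltyp_empty using z by (simp add: fun_eq_iff)
  moreover have "\<forall>j<morder i. 1 \<le> (\<lambda>_. 1::nat) j" by simp
  ultimately show ?case by (intro exI[of _ "\<lambda>_. 1"] conjI)
next
  case (Suc N)
  have fin: "finite {k. i k \<noteq> 0}" and i0: "i 0 = 0" using Suc.prems by (auto simp: mindex_def)
  have mS: "morder i = Suc N" using Suc.hyps(2) by simp
  have "{k. i k \<noteq> 0} \<noteq> {}"
  proof
    assume "{k. i k \<noteq> 0} = {}"
    then have "morder i = 0" unfolding morder_def by (simp only: sum.empty)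
    then show False using mS by simp
  qed
  then obtain k where k: "i k \<noteq> 0" by auto
  have k1: "1 \<le> k" using k i0 by (cases k) auto
  define i' where "i' = i(k := i k - 1)"
  have sub: "{k. i' k \<noteq> 0} \<subseteq> {k. i k \<noteq> 0}" by (auto simp: i'_def)
  have i'0: "i' 0 = 0" using i0 k1 by (simp add: i'_def)
  have mi': "mindex i'" unfolding mindex_def using i'0 finite_subset[OF sub fin] by blast
  have kD: "k \<in> {k. i k \<noteq> 0}" using k by simp
  have a: "morder i = i k + (\<Sum>k'\<in>{k. i k \<noteq> 0} - {k}. i k')"
    unfolding morder_def by (rule sum.remove[OF fin kD])
  have b: "morder i' = i' k + (\<Sum>k'\<in>{k. i k \<noteq> 0} - {k}. i' k')"
    unfolding morder_alt[OF fin sub] by (rule sum.remove[OF fin kD])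
  have c: "(\<Sum>k'\<in>{k. i k \<noteq> 0} - {k}. i' k') = (\<Sum>k'\<in>{k. i k \<noteq> 0} - {k}. i k')"
    by (intro sum.cong) (auto simp: i'_def)
  have "i' k = i k - 1" by (simp add: i'_def)
  then have "morder i' = N" using a b c mS k by simp
  then obtain len' where len': "\<forall>j<N. 1 \<le> len' j" "ltyp len' {..<N} = i'"
    using Suc.hyps(1)[of i'] mi' by blast
  define len where "len = len'(N := k)"
  have e0: "{j \<in> {..<N}. len j = k'} = {j \<in> {..<N}. len' j = k'}" for k' by (auto simp: len_def)
  have e1: "ltyp len {..<N} = ltyp len' {..<N}" unfolding ltyp_def e0 ..
  have lN: "len N = k" by (simp add: len_def)
  have "ltyp len {..<Suc N} = i"
  proof
    fix k'
    have "ltyp len {..<Suc N} k' = ltyp len (insert N {..<N}) k'" by (simp add: lessThan_Suc)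
    also have "\<dots> = ltyp len {..<N} k' + (if len N = k' then 1 else 0)" by (rule ltyp_insert) auto
    also have "ltyp len {..<N} k' = i' k'" using e1 len'(2) by simp
    also have "i' k' + (if len N = k' then 1 else 0) = i k'"
      using k unfolding lN i'_def by (cases "k = k'") auto
    finally show "ltyp len {..<Suc N} k' = i k'" .
  qed
  moreover have "\<forall>j<Suc N. 1 \<le> len j"
  proof (intro allI impI)
    fix j assume "j < Suc N"
    then show "1 \<le> len j" using len'(1) k1 by (cases "j = N") (auto simp: len_def)
  qed
  ultimately show ?case unfolding mS by (intro exI[of _ len] conjI)
qed

lemma exists_sys:
  assumes len1: "\<forall>j<r. 1 \<le> len j"
  shows "\<exists>\<sigma>s. cyc_sys r len \<sigma>s"
proof -
  define S where "S j = (\<Sum>t<j. len t)" for j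
  define \<sigma>s where "\<sigma>s j = cycle_of_list [S j..<S j + len j]" for j
  have supp_sub: "supp (\<sigma>s j) \<subseteq> {S j..<S j + len j}" for j
  proof
    fix x assume "x \<in> supp (\<sigma>s j)"
    then have "cycle_of_list [S j..<S j + len j] x \<noteq> x" by (simp add: supp_def \<sigma>s_def)
    then have "x \<in> set [S j..<S j + len j]" using id_outside_supp by metis
    then show "x \<in> {S j..<S j + len j}" by simp
  qed
  have Smono: "S j1 \<le> S j2" if "j1 \<le> j2" for j1 j2
    unfolding S_def using that by (intro sum_mono2) auto
  have SSuc: "S (Suc j) = S j + len j" for j by (simp add: S_def)
  have disj: "supp (\<sigma>s j) \<inter> supp (\<sigma>s j') = {}" if "j < j'" for j j'
  proof -
    have "S j + len j \<le> S j'" using Smono[of "Suc j" j'] that SSuc by simp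
    show ?thesis
    proof (rule ccontr)
      assume "supp (\<sigma>s j) \<inter> supp (\<sigma>s j') \<noteq> {}"
      then obtain x where x: "x \<in> supp (\<sigma>s j)" "x \<in> supp (\<sigma>s j')" by blast
      have "x < S j + len j" using x(1) supp_sub[of j] by auto
      moreover have "S j' \<le> x" using x(2) supp_sub[of j'] by auto
      ultimately show False using \<open>S j + len j \<le> S j'\<close> by simp
    qed
  qed
  have "cyc_sys r len \<sigma>s"
    unfolding cyc_sys_def
  proof (intro conjI allI impI)
    fix j assume "j < r"
    then show "1 \<le> len j" using len1 by simp
    show "is_cycle (len j) (\<sigma>s j)" unfolding is_cycle_def \<sigma>s_def
      by (rule exI[of _ "[S j..<S j + len j]"]) simp
  next
    fix j j' assume "j < r" "j' < r" "j \<noteq> j'"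
    then show "supp (\<sigma>s j) \<inter> supp (\<sigma>s j') = {}"
      using disj[of j j'] disj[of j' j] by (cases "j < j'") auto
  qed
  then show ?thesis by blast
qed

lemma tendsto_ev:
  assumes "\<forall>n\<ge>1. f n = g n" "f \<longlonglongrightarrow> L"
  shows "g \<longlonglongrightarrow> L"
proof -
  have "eventually (\<lambda>n. f n = g n) sequentially"
    using assms(1) unfolding eventually_sequentially by blast
  then show ?thesis using Lim_transform_eventually[OF assms(2)] by blast
qed

theorem mainTheorem10:
  fixes \<rho> :: "nat \<Rightarrow> nat list \<Rightarrow> real"
  assumes prob: "\<forall>n\<ge>1. (\<forall>p\<in>partitions n. 0 \<le> \<rho> n p) \<and> (\<Sum>p\<in>partitions n. \<rho> n p) = 1"
  shows "LLN_appropriate \<rho> \<longleftrightarrow>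
    (\<exists>c :: nat \<Rightarrow> real.
       (\<forall>k\<ge>1. \<forall>\<sigma>. is_cycle k \<sigma> \<longrightarrow>
          (\<lambda>n. real n powr ((real k - 1) / 2) * Mrho \<rho> n \<sigma>) \<longlonglongrightarrow> c k) \<and>
       (\<forall>r\<ge>2. \<forall>\<sigma>s :: nat \<Rightarrow> (nat \<Rightarrow> nat). \<forall>len :: nat \<Rightarrow> nat.
          (\<forall>j<r. 1 \<le> len j \<and> is_cycle (len j) (\<sigma>s j)) \<and>
          (\<forall>j<r. \<forall>j'<r. j \<noteq> j' \<longrightarrow> supp (\<sigma>s j) \<inter> supp (\<sigma>s j') = {}) \<longrightarrow>
          (\<lambda>n. real n powr ((\<Sum>j<r. real (len j) - 1) / 2) * kappa \<rho> n r \<sigma>s) \<longlonglongrightarrow> 0))"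
proof
  assume "LLN_appropriate \<rho>"
  then obtain c where c1: "\<forall>k\<ge>1. (\<lambda>n. lnA_deriv \<rho> n (unit_index k)) \<longlonglongrightarrow> c k"
    and c2: "\<forall>i. mindex i \<and> 2 \<le> morder i \<longrightarrow> (\<lambda>n. lnA_deriv \<rho> n i) \<longlonglongrightarrow> 0"
    unfolding LLN_appropriate_def by blast
  have A: "(\<lambda>n. real n powr ((real k - 1) / 2) * Mrho \<rho> n \<sigma>) \<longlonglongrightarrow> c k"
    if k: "1 \<le> k" and s: "is_cycle k \<sigma>" for k \<sigma>
  proof -
    have "\<forall>n\<ge>1. lnA_deriv \<rho> n (unit_index k) = real n powr ((real k - 1) / 2) * Mrho \<rho> n \<sigma>"
      by (intro allI impI) (rule single_cycle[OF s k])
    moreover have "(\<lambda>n. lnA_deriv \<rho> n (unit_index k)) \<longlonglongrightarrow> c k" by (rule c1[rule_format, OF k])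
    ultimately show ?thesis by (rule tendsto_ev)
  qed
  have B: "(\<lambda>n. real n powr ((\<Sum>j<r. real (len j) - 1) / 2) * kappa \<rho> n r \<sigma>s) \<longlonglongrightarrow> 0"
    if r: "2 \<le> r" and h1: "\<forall>j<r. 1 \<le> len j \<and> is_cycle (len j) (\<sigma>s j)"
      and h2: "\<forall>j<r. \<forall>j'<r. j \<noteq> j' \<longrightarrow> supp (\<sigma>s j) \<inter> supp (\<sigma>s j') = {}" for r \<sigma>s len
  proof -
    have cs: "cyc_sys r len \<sigma>s" unfolding cyc_sys_def using h1 h2 by blast
    have len1: "\<forall>j<r. 1 \<le> len j" using h1 by blast
    have r1: "1 \<le> r" using r by simp
    have "mindex (ltyp len {..<r}) \<and> 2 \<le> morder (ltyp len {..<r})"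
      using mindex_ltyp[OF len1] r unfolding morder_ltyp by blast
    then have "(\<lambda>n. lnA_deriv \<rho> n (ltyp len {..<r})) \<longlonglongrightarrow> 0" by (rule c2[rule_format])
    moreover have "\<forall>n\<ge>1. lnA_deriv \<rho> n (ltyp len {..<r}) = real n powr ((\<Sum>j<r. real (len j) - 1) / 2) * kappa \<rho> n r \<sigma>s"
      by (intro allI impI) (rule central[OF cs r1])
    ultimately show ?thesis by (rule tendsto_ev[rotated])
  qed
  show "\<exists>c :: nat \<Rightarrow> real.
       (\<forall>k\<ge>1. \<forall>\<sigma>. is_cycle k \<sigma> \<longrightarrow>
          (\<lambda>n. real n powr ((real k - 1) / 2) * Mrho \<rho> n \<sigma>) \<longlonglongrightarrow> c k) \<and>
       (\<forall>r\<ge>2. \<forall>\<sigma>s :: nat \<Rightarrow> (nat \<Rightarrow> nat). \<forall>len :: nat \<Rightarrow> nat.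
          (\<forall>j<r. 1 \<le> len j \<and> is_cycle (len j) (\<sigma>s j)) \<and>
          (\<forall>j<r. \<forall>j'<r. j \<noteq> j' \<longrightarrow> supp (\<sigma>s j) \<inter> supp (\<sigma>s j') = {}) \<longrightarrow>
          (\<lambda>n. real n powr ((\<Sum>j<r. real (len j) - 1) / 2) * kappa \<rho> n r \<sigma>s) \<longlonglongrightarrow> 0)"
  proof (intro exI[of _ c] conjI allI impI)
    fix k :: nat and \<sigma> :: "nat \<Rightarrow> nat" assume "1 \<le> k" "is_cycle k \<sigma>"
    then show "(\<lambda>n. real n powr ((real k - 1) / 2) * Mrho \<rho> n \<sigma>) \<longlonglongrightarrow> c k" by (rule A)
  next
    fix r :: nat and \<sigma>s :: "nat \<Rightarrow> nat \<Rightarrow> nat" and len :: "nat \<Rightarrow> nat" assume r: "2 \<le> r" and h: "(\<forall>j<r. 1 \<le> len j \<and> is_cycle (len j) (\<sigma>s j)) \<and>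
          (\<forall>j<r. \<forall>j'<r. j \<noteq> j' \<longrightarrow> supp (\<sigma>s j) \<inter> supp (\<sigma>s j') = {})"
    show "(\<lambda>n. real n powr ((\<Sum>j<r. real (len j) - 1) / 2) * kappa \<rho> n r \<sigma>s) \<longlonglongrightarrow> 0"
      using B[OF r conjunct1[OF h] conjunct2[OF h]] .
  qed
next
  assume "\<exists>c :: nat \<Rightarrow> real.
       (\<forall>k\<ge>1. \<forall>\<sigma>. is_cycle k \<sigma> \<longrightarrow>
          (\<lambda>n. real n powr ((real k - 1) / 2) * Mrho \<rho> n \<sigma>) \<longlonglongrightarrow> c k) \<and>
       (\<forall>r\<ge>2. \<forall>\<sigma>s :: nat \<Rightarrow> (nat \<Rightarrow> nat). \<forall>len :: nat \<Rightarrow> nat.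
          (\<forall>j<r. 1 \<le> len j \<and> is_cycle (len j) (\<sigma>s j)) \<and>
          (\<forall>j<r. \<forall>j'<r. j \<noteq> j' \<longrightarrow> supp (\<sigma>s j) \<inter> supp (\<sigma>s j') = {}) \<longrightarrow>
          (\<lambda>n. real n powr ((\<Sum>j<r. real (len j) - 1) / 2) * kappa \<rho> n r \<sigma>s) \<longlonglongrightarrow> 0)"
  then obtain c where c1: "\<forall>k\<ge>1. \<forall>\<sigma>. is_cycle k \<sigma> \<longrightarrow>
          (\<lambda>n. real n powr ((real k - 1) / 2) * Mrho \<rho> n \<sigma>) \<longlonglongrightarrow> c k"
    and c2: "\<forall>r\<ge>2. \<forall>\<sigma>s :: nat \<Rightarrow> (nat \<Rightarrow> nat). \<forall>len :: nat \<Rightarrow> nat.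
          (\<forall>j<r. 1 \<le> len j \<and> is_cycle (len j) (\<sigma>s j)) \<and>
          (\<forall>j<r. \<forall>j'<r. j \<noteq> j' \<longrightarrow> supp (\<sigma>s j) \<inter> supp (\<sigma>s j') = {}) \<longrightarrow>
          (\<lambda>n. real n powr ((\<Sum>j<r. real (len j) - 1) / 2) * kappa \<rho> n r \<sigma>s) \<longlonglongrightarrow> 0"
    by (elim exE conjE)
  have A: "(\<lambda>n. lnA_deriv \<rho> n (unit_index k)) \<longlonglongrightarrow> c k" if k: "1 \<le> k" for k
  proof -
    have s: "is_cycle k (cycle_of_list [0..<k])" unfolding is_cycle_def by (rule exI[of _ "[0..<k]"]) simp
    have "\<forall>n\<ge>1. real n powr ((real k - 1) / 2) * Mrho \<rho> n (cycle_of_list [0..<k]) = lnA_deriv \<rho> n (unit_index k)"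
      by (intro allI impI) (rule single_cycle[OF s k, symmetric])
    moreover have "(\<lambda>n. real n powr ((real k - 1) / 2) * Mrho \<rho> n (cycle_of_list [0..<k])) \<longlonglongrightarrow> c k"
      by (rule c1[rule_format, OF k s])
    ultimately show ?thesis by (rule tendsto_ev)
  qed
  have B: "(\<lambda>n. lnA_deriv \<rho> n i) \<longlonglongrightarrow> 0" if mi: "mindex i" and o2: "2 \<le> morder i" for i
  proof -
    obtain len where len: "\<forall>j<morder i. 1 \<le> len j" "ltyp len {..<morder i} = i"
      using exists_len[OF mi] by blast
    obtain \<sigma>s where cs: "cyc_sys (morder i) len \<sigma>s" using exists_sys[OF len(1)] by blast
    have h: "(\<forall>j<morder i. 1 \<le> len j \<and> is_cycle (len j) (\<sigma>s j)) \<and>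
          (\<forall>j<morder i. \<forall>j'<morder i. j \<noteq> j' \<longrightarrow> supp (\<sigma>s j) \<inter> supp (\<sigma>s j') = {})"
      using cs unfolding cyc_sys_def by blast
    have lim: "(\<lambda>n. real n powr ((\<Sum>j<morder i. real (len j) - 1) / 2) * kappa \<rho> n (morder i) \<sigma>s) \<longlonglongrightarrow> 0"
      by (rule c2[rule_format, OF o2 h])
    have r1: "1 \<le> morder i" using o2 by simp
    have "\<forall>n\<ge>1. real n powr ((\<Sum>j<morder i. real (len j) - 1) / 2) * kappa \<rho> n (morder i) \<sigma>s = lnA_deriv \<rho> n i"
      by (intro allI impI) (rule central[OF cs r1, unfolded len(2), symmetric])
    then show ?thesis using lim by (rule tendsto_ev)
  qed
  show "LLN_appropriate \<rho>" unfolding LLN_appropriate_def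
  proof (intro exI[of _ c] conjI allI impI)
    fix k :: nat assume "1 \<le> k" then show "(\<lambda>n. lnA_deriv \<rho> n (unit_index k)) \<longlonglongrightarrow> c k" by (rule A)
  next
    fix i :: "nat \<Rightarrow> nat" assume "mindex i \<and> 2 \<le> morder i"
    then show "(\<lambda>n. lnA_deriv \<rho> n i) \<longlonglongrightarrow> 0" using B by (elim conjE)
  qed
qed


end
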